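(* Let $A,B$ be positive definite matrices with $mI\le A,B\le MI$ for some scalars $0<m<M$, put $h=M/m$, and let $\Phi$ be a unital positive linear map between matrix algebras. Then \[K(h,p)^{1/p}\Big(\mathrm{Tr}\big[\Phi(A^p)^{1/p}\big]+\mathrm{Tr}\big[\Phi(B^p)^{1/p}\big]\Big)\le\mathrm{Tr}\big[\Phi((A+B)^p)^{1/p}\big]\le K(h,p)^{-1/p}\Big(\mathrm{Tr}\big[\Phi(A^p)^{1/p}\big]+\mathrm{Tr}\big[\Phi(B^p)^{1/p}\big]\Big)\] for all $p<0$ and all $0<p\le1$, and \[K(h,p)^{-1/p}\Big(\mathrm{Tr}\big[\Phi(A^p)^{1/p}\big]+\mathrm{Tr}\big[\Phi(B^p)^{1/p}\big]\Big)\le\mathrm{Tr}\big[\Phi((A+B)^p)^{1/p}\big]\le K(h,p)^{1/p}\Big(\mathrm{Tr}\big[\Phi(A^p)^{1/p}\big]+\mathrm{Tr}\big[\Phi(B^p)^{1/p}\big]\Big)\] for all $p\ge1$.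
   Context: $\mathrm{Tr}$ is the trace, $\le$ the Löwner order; unital positive linear map: preserves positive semidefiniteness and $\Phi(I)=I$. Generalized Kantorovich constant: $K(h,p)=\frac{h^p-h}{(p-1)(h-1)}\Big(\frac{p-1}{p}\frac{h^p-1}{h^p-h}\Big)^p$ (with $K(h,1)=1$ by continuity). *)

theory Defs
  imports Complex_Main "Jordan_Normal_Form.Matrix"
begin

definition adj :: "complex mat \<Rightarrow> complex mat" where
  "adj A = mat (dim_col A) (dim_row A) (\<lambda>(i,j). cnj (A $$ (j,i)))"

definition hermitian :: "complex mat \<Rightarrow> bool" where
  "hermitian A \<longleftrightarrow> A \<in> carrier_mat (dim_row A) (dim_row A) \<and> adj A = A"

definition psd :: "complex mat \<Rightarrow> bool" where
  "psd A \<longleftrightarrow> hermitian A \<and>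
     (\<forall>v \<in> carrier_vec (dim_row A). 0 \<le> Re (conjugate v \<bullet> (A *\<^sub>v v)))"

definition pd :: "complex mat \<Rightarrow> bool" where
  "pd A \<longleftrightarrow> hermitian A \<and>
     (\<forall>v \<in> carrier_vec (dim_row A). v \<noteq> 0\<^sub>v (dim_row A) \<longrightarrow> 0 < Re (conjugate v \<bullet> (A *\<^sub>v v)))"

definition loewner_le :: "complex mat \<Rightarrow> complex mat \<Rightarrow> bool" where
  "loewner_le A B \<longleftrightarrow> dim_row A = dim_row B \<and> dim_col A = dim_col B \<and> psd (B - A)"

definition unitary :: "nat \<Rightarrow> complex mat \<Rightarrow> bool" where
  "unitary n U \<longleftrightarrow> U \<in> carrier_mat n n \<and> adj U * U = 1\<^sub>m n"

definition mat_powr :: "complex mat \<Rightarrow> real \<Rightarrow> complex mat" where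
  "mat_powr A p = (SOME B. \<exists>U lam. unitary (dim_row A) U \<and>
      A = U * mat_diag (dim_row A) (\<lambda>i. complex_of_real (lam i)) * adj U \<and>
      B = U * mat_diag (dim_row A) (\<lambda>i. complex_of_real (lam i powr p)) * adj U)"

definition unital_positive_linear_map :: "nat \<Rightarrow> nat \<Rightarrow> (complex mat \<Rightarrow> complex mat) \<Rightarrow> bool" where
  "unital_positive_linear_map n k \<Phi> \<longleftrightarrow>
     (\<forall>A \<in> carrier_mat n n. \<Phi> A \<in> carrier_mat k k) \<and>
     (\<forall>A \<in> carrier_mat n n. \<forall>B \<in> carrier_mat n n. \<Phi> (A + B) = \<Phi> A + \<Phi> B) \<and>
     (\<forall>A \<in> carrier_mat n n. \<forall>c. \<Phi> (c \<cdot>\<^sub>m A) = c \<cdot>\<^sub>m \<Phi> A) \<and>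
     (\<forall>A \<in> carrier_mat n n. psd A \<longrightarrow> psd (\<Phi> A)) \<and>
     \<Phi> (1\<^sub>m n) = 1\<^sub>m k"

definition kantorovich :: "real \<Rightarrow> real \<Rightarrow> real" where
  "kantorovich h p = (if p = 1 then 1 else
     (h powr p - h) / ((p - 1) * (h - 1)) *
     (((p - 1) / p) * ((h powr p - 1) / (h powr p - h))) powr p)"

definition mtrace :: "complex mat \<Rightarrow> complex" where
  "mtrace A = (\<Sum>i<dim_row A. A $$ (i,i))"

definition trPhi :: "(complex mat \<Rightarrow> complex mat) \<Rightarrow> complex mat \<Rightarrow> real \<Rightarrow> real" where
  "trPhi \<Phi> X p = Re (mtrace (mat_powr (\<Phi> (mat_powr X p)) (1 / p)))"

end

theory Submission
  imports Defs "Jordan_Normal_Form.Spectral_Radius"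
begin


lemma bern_aux:
  fixes p u :: real
  assumes u: "u > 0" and p: "p \<le> 0 \<or> 1 \<le> p"
  shows "1 + p * (u - 1) \<le> u powr p"
proof -
  define g where "g = (\<lambda>x::real. x powr p - p * x)"
  have D: "DERIV g x :> (p * x powr (p - 1) - p)" if "x > 0" for x
    unfolding g_def using that by (auto intro!: derivative_eq_intros)
  have sgn1: "p * x powr (p - 1) - p \<ge> 0" if "x \<ge> 1" for x
  proof (cases "p \<le> 0")
    case True
    have "x powr (p - 1) \<le> x powr 0" using that True by (intro powr_mono) auto
    then have "x powr (p-1) \<le> 1" using that by simp
    then show ?thesis using True by (metis diff_ge_0_iff_ge mult_le_cancel_left1 linorder_not_le order_less_le_trans zero_less_one mult_le_cancel_left_neg mult.right_neutral) 
  next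
    case False
    then have "p \<ge> 1" using p by auto
    then have "x powr (p - 1) \<ge> 1" using that by (simp add: ge_one_powr_ge_zero)
    then show ?thesis using \<open>p \<ge> 1\<close> by (simp add: mult_le_cancel_left1)
  qed
  have sgn2: "p * x powr (p - 1) - p \<le> 0" if "x > 0" "x \<le> 1" for x
  proof (cases "p \<le> 0")
    case True
    have a: "x powr (1 - p) \<le> 1" using that True by (intro powr_le1) auto
    have b: "x powr (1 - p) > 0" using that by simp
    have "x powr (p - 1) = inverse (x powr (1 - p))" using that by (simp add: powr_minus[symmetric])
    then have "x powr (p - 1) \<ge> 1" using a b by (simp add: one_le_inverse)
    then show ?thesis using True mult_nonpos_nonneg[of p "x powr (p-1) - 1"] by (simp add: algebra_simps)
  next
    case False
    then have "p \<ge> 1" using p by auto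
    then have "x powr (p - 1) \<le> 1" using that by (intro powr_le1) auto
    then show ?thesis using \<open>p \<ge> 1\<close> by (simp add: mult_le_cancel_left1)
  qed
  have "g 1 \<le> g u"
  proof (cases "u \<ge> 1")
    case True
    show ?thesis by (rule DERIV_nonneg_imp_nondecreasing[OF True]) (use D sgn1 in force)
  next
    case False
    show ?thesis by (rule DERIV_nonpos_imp_nonincreasing) (use D sgn2 False u in force)+
  qed
  then show ?thesis unfolding g_def by (simp add: algebra_simps)
qed

lemma bern_cc:
  fixes p u :: real
  assumes u: "u > 0" and p0: "0 \<le> p" and p1: "p \<le> 1"
  shows "u powr p \<le> 1 + p * (u - 1)"
proof -
  define g where "g = (\<lambda>x::real. p * x - x powr p)"
  have D: "DERIV g x :> (p - p * x powr (p - 1))" if "x > 0" for x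
    unfolding g_def using that by (auto intro!: derivative_eq_intros)
  have sgn1: "p - p * x powr (p - 1) \<ge> 0" if "x \<ge> 1" for x
  proof -
    have "x powr (p - 1) \<le> x powr 0" using that p1 by (intro powr_mono) auto
    then have "x powr (p-1) \<le> 1" using that by simp
    then show ?thesis using p0 mult_left_mono[of "x powr (p-1)" 1 p] by simp
  qed
  have sgn2: "p - p * x powr (p - 1) \<le> 0" if "x > 0" "x \<le> 1" for x
  proof -
    have a: "x powr (1 - p) \<le> 1" using that p1 by (intro powr_le1) auto
    have b: "x powr (1 - p) > 0" using that by simp
    have "x powr (p - 1) = inverse (x powr (1 - p))" using that by (simp add: powr_minus[symmetric])
    then have "x powr (p - 1) \<ge> 1" using a b by (simp add: one_le_inverse)
    then show ?thesis using p0 mult_left_mono[of 1 "x powr (p-1)" p] by simp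
  qed
  have "g 1 \<le> g u"
  proof (cases "u \<ge> 1")
    case True
    show ?thesis by (rule DERIV_nonneg_imp_nondecreasing[OF True]) (use D sgn1 in force)
  next
    case False
    show ?thesis by (rule DERIV_nonpos_imp_nonincreasing) (use D sgn2 False u in force)+
  qed
  then show ?thesis unfolding g_def by (simp add: algebra_simps)
qed

lemma tan_cv:
  fixes p x s :: real
  assumes x: "x > 0" and s: "s > 0" and p: "p \<le> 0 \<or> 1 \<le> p"
  shows "s powr p + p * s powr (p - 1) * (x - s) \<le> x powr p"
proof -
  have "1 + p * (x / s - 1) \<le> (x / s) powr p" using bern_aux[of "x/s" p] x s p by simp
  then have "s powr p * (1 + p * (x / s - 1)) \<le> s powr p * (x / s) powr p"
    by (intro mult_left_mono) auto
  also have "s powr p * (x / s) powr p = x powr p" using x s by (simp add: powr_divide)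
  also have "s powr p * (1 + p * (x / s - 1)) = s powr p + p * s powr (p - 1) * (x - s)"
    using s by (simp add: powr_diff field_simps)
  finally show ?thesis .
qed

lemma tan_cc:
  fixes p x s :: real
  assumes x: "x > 0" and s: "s > 0" and p0: "0 \<le> p" and p1: "p \<le> 1"
  shows "x powr p \<le> s powr p + p * s powr (p - 1) * (x - s)"
proof -
  have "(x / s) powr p \<le> 1 + p * (x / s - 1)" using bern_cc[of "x/s" p] x s p0 p1 by simp
  then have "s powr p * (x / s) powr p \<le> s powr p * (1 + p * (x / s - 1))"
    by (intro mult_left_mono) auto
  also have "s powr p * (x / s) powr p = x powr p" using x s by (simp add: powr_divide)
  also have "s powr p * (1 + p * (x / s - 1)) = s powr p + p * s powr (p - 1) * (x - s)"
    using s by (simp add: powr_diff field_simps)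
  finally show ?thesis .
qed


lemma kant_line:
  fixes h p t :: real
  assumes h: "h > 1" and p0: "p \<noteq> 0" and p1: "p \<noteq> 1" and t: "t > 0"
  shows "(p < 0 \<or> 1 < p) \<longrightarrow> (h - h powr p) / (h - 1) + (h powr p - 1) / (h - 1) * t \<le> kantorovich h p * t powr p"
    and "(0 < p \<and> p < 1) \<longrightarrow> kantorovich h p * t powr p \<le> (h - h powr p) / (h - 1) + (h powr p - 1) / (h - 1) * t"
    and "kantorovich h p > 0"
proof -
  define c where "c = (h powr p - h) / ((p - 1) * (h - 1))"
  define r where "r = (p - 1) / p * ((h powr p - 1) / (h powr p - h))"
  have K: "kantorovich h p = c * r powr p" unfolding kantorovich_def c_def r_def using p1 by simp
  have signs: "c > 0 \<and> r > 0 \<and> h powr p \<noteq> h \<and> h powr p \<noteq> 1"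
  proof (cases "p < 0")
    case True
    have a: "h powr p < h powr 0" using True h by (intro powr_less_mono) auto
    then have a: "h powr p < 1" using h by simp
    have "(p-1)*(h-1) < 0" using True h by (intro mult_neg_pos) auto
    then show ?thesis using True h a unfolding c_def r_def
      by (auto simp: zero_less_mult_iff zero_less_divide_iff)
  next
    case False
    then have p0': "p > 0" using p0 by auto
    show ?thesis
    proof (cases "p < 1")
      case True
      have a: "h powr 0 < h powr p" using p0' h by (intro powr_less_mono) auto
      have b: "h powr p < h powr 1" using True h by (intro powr_less_mono) auto
      have a': "1 < h powr p" using a h by simp
      have f1: "(p-1)*(h-1) < 0" using True h by (intro mult_neg_pos) auto
      have f2: "(p-1)*(h powr p-1) < 0" using True a' by (intro mult_neg_pos) auto
      have f3: "p*(h powr p-h) < 0" using p0' b h by (intro mult_pos_neg) auto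
      show ?thesis using a' b True p0' h f1 f2 f3 unfolding c_def r_def
        by (auto simp: zero_less_mult_iff zero_less_divide_iff)
    next
      case False
      then have "p > 1" using p1 by auto
      have b: "h powr 1 < h powr p" using \<open>p > 1\<close> h by (intro powr_less_mono) auto
      then show ?thesis using \<open>p > 1\<close> h unfolding c_def r_def
        by (auto simp: zero_less_mult_iff zero_less_divide_iff)
    qed
  qed
  show "kantorovich h p > 0" using K signs by simp
  have nz: "h powr p - h \<noteq> 0" "h - 1 \<noteq> 0" "p - 1 \<noteq> 0" "p \<noteq> 0" using signs h p0 p1 by auto
  have e1: "c * p * r = (h powr p - 1) / (h - 1)" unfolding c_def r_def using nz by (simp add: divide_simps)
  have e2: "c - c * p = (h - h powr p) / (h - 1)" unfolding c_def using nz by (simp add: divide_simps) (simp add: algebra_simps)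
  have eq: "c + c * p * (r * t - 1) = (h - h powr p) / (h - 1) + (h powr p - 1) / (h - 1) * t"
    by (simp only: e1[symmetric] e2[symmetric]) (simp add: algebra_simps)
  have Kt: "kantorovich h p * t powr p = c * (r * t) powr p"
    using K signs t by (simp add: powr_mult)
  show "(p < 0 \<or> 1 < p) \<longrightarrow> (h - h powr p) / (h - 1) + (h powr p - 1) / (h - 1) * t \<le> kantorovich h p * t powr p"
  proof
    assume pp: "p < 0 \<or> 1 < p"
    have "1 + p * (r * t - 1) \<le> (r * t) powr p" using bern_aux[of "r * t" p] signs t pp by auto
    then have "c * (1 + p * (r * t - 1)) \<le> c * (r * t) powr p" using signs by (intro mult_left_mono) auto
    then show "(h - h powr p) / (h - 1) + (h powr p - 1) / (h - 1) * t \<le> kantorovich h p * t powr p"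
      using eq Kt by (simp add: algebra_simps)
  qed
  show "(0 < p \<and> p < 1) \<longrightarrow> kantorovich h p * t powr p \<le> (h - h powr p) / (h - 1) + (h powr p - 1) / (h - 1) * t"
  proof
    assume pp: "0 < p \<and> p < 1"
    have "(r * t) powr p \<le> 1 + p * (r * t - 1)" using bern_cc[of "r * t" p] signs t pp by auto
    then have "c * (r * t) powr p \<le> c * (1 + p * (r * t - 1))" using signs by (intro mult_left_mono) auto
    then show "kantorovich h p * t powr p \<le> (h - h powr p) / (h - 1) + (h powr p - 1) / (h - 1) * t"
      using eq Kt by (simp add: algebra_simps)
  qed
qed

lemma kant_pos: fixes h p :: real assumes "h > 1" "p \<noteq> 0" shows "kantorovich h p > 0"
proof (cases "p = 1")
  case True then show ?thesis by (simp add: kantorovich_def)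
next
  case False
  show ?thesis using kant_line(3)[OF assms False, of 1] by simp
qed

lemma line_one: fixes h p :: real assumes "h > 1" shows "(h - h powr p) / (h - 1) + (h powr p - 1) / (h - 1) * 1 = 1"
proof -
  have "h - 1 \<noteq> 0" "h \<noteq> 1" using assms by auto
  then show ?thesis using assms by (simp add: divide_simps)
qed

lemma kant_ge1: fixes h p :: real assumes "h > 1" "p < 0 \<or> 1 \<le> p" shows "kantorovich h p \<ge> 1"
proof (cases "p = 1")
  case True then show ?thesis by (simp add: kantorovich_def)
next
  case False
  then show ?thesis using kant_line(1)[OF assms(1) _ False, of 1] line_one[OF assms(1), of p] assms by auto
qed

lemma kant_le1: fixes h p :: real assumes "h > 1" "0 < p" "p \<le> 1" shows "kantorovich h p \<le> 1"
proof (cases "p = 1")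
  case True then show ?thesis by (simp add: kantorovich_def)
next
  case False
  then show ?thesis using kant_line(2)[OF assms(1) _ False, of 1] line_one[OF assms(1), of p] assms by auto
qed


lemma sum_lin:
  fixes w x :: "'i \<Rightarrow> real"
  assumes "(\<Sum>i\<in>I. w i) = 1"
  shows "(\<Sum>i\<in>I. w i * (A0 + B0 * x i)) = A0 + B0 * (\<Sum>i\<in>I. w i * x i)"
proof -
  have "(\<Sum>i\<in>I. w i * (A0 + B0 * x i)) = (\<Sum>i\<in>I. A0 * w i) + (\<Sum>i\<in>I. B0 * (w i * x i))"
    by (simp add: algebra_simps sum.distrib)
  also have "\<dots> = A0 * (\<Sum>i\<in>I. w i) + B0 * (\<Sum>i\<in>I. w i * x i)"
    by (simp add: sum_distrib_left)
  finally show ?thesis using assms by simp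
qed

lemma chord_cv:
  fixes a h p x :: real
  assumes a: "a > 0" and h: "h > 1" and x: "a \<le> x" "x \<le> a * h"
  shows "(p \<le> 0 \<or> 1 \<le> p) \<longrightarrow> x powr p \<le> a powr p * ((h - h powr p) / (h - 1) + (h powr p - 1) / (h - 1) * (x / a))"
    and "(0 \<le> p \<and> p \<le> 1) \<longrightarrow> a powr p * ((h - h powr p) / (h - 1) + (h powr p - 1) / (h - 1) * (x / a)) \<le> x powr p"
proof -
  define b where "b = a * h"
  have ab: "a < b" using a h unfolding b_def by simp
  have xp: "x > 0" using a x by simp
  have bp: "b powr p = a powr p * h powr p" unfolding b_def using a h by (simp add: powr_mult)
  have eq: "((b - x) * a powr p + (x - a) * b powr p) / (b - a) = a powr p * ((h - h powr p) / (h - 1) + (h powr p - 1) / (h - 1) * (x / a))"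
    unfolding bp using a h unfolding b_def by (simp add: divide_simps) (simp add: algebra_simps)
  define d where "d = p * x powr (p - 1)"
  have w1: "0 \<le> b - x" "0 \<le> x - a" using x unfolding b_def by auto
  show "(p \<le> 0 \<or> 1 \<le> p) \<longrightarrow> x powr p \<le> a powr p * ((h - h powr p) / (h - 1) + (h powr p - 1) / (h - 1) * (x / a))"
  proof
    assume pp: "p \<le> 0 \<or> 1 \<le> p"
    have t1: "x powr p + d * (a - x) \<le> a powr p" using tan_cv[of a x p] a xp pp unfolding d_def by simp
    have t2: "x powr p + d * (b - x) \<le> b powr p" using tan_cv[of b x p] ab a xp pp unfolding d_def by simp
    have "(b - x) * (x powr p + d * (a - x)) + (x - a) * (x powr p + d * (b - x)) \<le> (b - x) * a powr p + (x - a) * b powr p"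
      using mult_left_mono[OF t1 w1(1)] mult_left_mono[OF t2 w1(2)] by linarith
    moreover have "(b - x) * (x powr p + d * (a - x)) + (x - a) * (x powr p + d * (b - x)) = (b - a) * x powr p"
      by (simp add: algebra_simps)
    ultimately have "(b - a) * x powr p \<le> (b - x) * a powr p + (x - a) * b powr p" by simp
    then have "x powr p \<le> ((b - x) * a powr p + (x - a) * b powr p) / (b - a)" using ab by (simp add: field_simps)
    then show "x powr p \<le> a powr p * ((h - h powr p) / (h - 1) + (h powr p - 1) / (h - 1) * (x / a))" using eq by simp
  qed
  show "(0 \<le> p \<and> p \<le> 1) \<longrightarrow> a powr p * ((h - h powr p) / (h - 1) + (h powr p - 1) / (h - 1) * (x / a)) \<le> x powr p"
  proof
    assume pp: "0 \<le> p \<and> p \<le> 1"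
    have t1: "a powr p \<le> x powr p + d * (a - x)" using tan_cc[of a x p] a xp pp unfolding d_def by simp
    have t2: "b powr p \<le> x powr p + d * (b - x)" using tan_cc[of b x p] ab a xp pp unfolding d_def by simp
    have "(b - x) * a powr p + (x - a) * b powr p \<le> (b - x) * (x powr p + d * (a - x)) + (x - a) * (x powr p + d * (b - x))"
      using mult_left_mono[OF t1 w1(1)] mult_left_mono[OF t2 w1(2)] by linarith
    moreover have "(b - x) * (x powr p + d * (a - x)) + (x - a) * (x powr p + d * (b - x)) = (b - a) * x powr p"
      by (simp add: algebra_simps)
    ultimately have "(b - x) * a powr p + (x - a) * b powr p \<le> (b - a) * x powr p" by simp
    then have "((b - x) * a powr p + (x - a) * b powr p) / (b - a) \<le> x powr p" using ab by (simp add: field_simps)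
    then show "a powr p * ((h - h powr p) / (h - 1) + (h powr p - 1) / (h - 1) * (x / a)) \<le> x powr p" using eq by simp
  qed
qed


lemma scal_core:
  fixes I :: "'i set" and w x :: "'i \<Rightarrow> real" and a h p :: real
  assumes a: "a > 0" and h: "h > 1" and p0: "p \<noteq> 0"
    and xb: "\<And>i. i \<in> I \<Longrightarrow> a \<le> x i \<and> x i \<le> a * h"
    and w0: "\<And>i. i \<in> I \<Longrightarrow> 0 \<le> w i" and w1: "(\<Sum>i\<in>I. w i) = 1"
  shows "(p < 0 \<or> (0 < p \<and> p \<le> 1)) \<longrightarrow> kantorovich h p powr (1/p) * (\<Sum>i\<in>I. w i * x i) \<le> (\<Sum>i\<in>I. w i * x i powr p) powr (1/p) \<and> (\<Sum>i\<in>I. w i * x i powr p) powr (1/p) \<le> (\<Sum>i\<in>I. w i * x i)"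
    and "1 \<le> p \<longrightarrow> (\<Sum>i\<in>I. w i * x i) \<le> (\<Sum>i\<in>I. w i * x i powr p) powr (1/p) \<and> (\<Sum>i\<in>I. w i * x i powr p) powr (1/p) \<le> kantorovich h p powr (1/p) * (\<Sum>i\<in>I. w i * x i)"
proof -
  define t where "t = (\<Sum>i\<in>I. w i * x i)"
  define S where "S = (\<Sum>i\<in>I. w i * x i powr p)"
  define K where "K = kantorovich h p"
  define \<alpha> where "\<alpha> = (h - h powr p) / (h - 1)"
  define \<beta> where "\<beta> = (h powr p - 1) / (h - 1)"
  have Kp: "K > 0" unfolding K_def using kant_pos h p0 by simp
  have "(\<Sum>i\<in>I. w i * a) \<le> t" unfolding t_def using xb w0 by (intro sum_mono mult_left_mono) auto
  then have ta: "a \<le> t" using w1 by (simp add: sum_distrib_right[symmetric])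
  then have tp: "t > 0" using a by simp
  have xp: "\<And>i. i \<in> I \<Longrightarrow> x i > 0" using xb a by force
  define d where "d = p * t powr (p - 1)"
  have jen_eq: "(\<Sum>i\<in>I. w i * ((t powr p - d * t) + d * x i)) = t powr p"
    using sum_lin[OF w1, of "t powr p - d * t" d x] unfolding t_def[symmetric] by simp
  have ch_eq: "(\<Sum>i\<in>I. w i * (a powr p * \<alpha> + (a powr p * \<beta> / a) * x i)) = a powr p * (\<alpha> + \<beta> * (t / a))"
    using sum_lin[OF w1, of "a powr p * \<alpha>" "a powr p * \<beta> / a" x] unfolding t_def[symmetric] by (simp add: algebra_simps)
  have ch_form: "a powr p * (\<alpha> + \<beta> * (y / a)) = a powr p * \<alpha> + (a powr p * \<beta> / a) * y" for y
    by (simp add: algebra_simps)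
  have Kt: "a powr p * (K * (t / a) powr p) = K * t powr p" using a tp by (simp add: powr_divide)
  have fin_cases: "(t powr p \<le> S \<and> S \<le> K * t powr p) \<or> (K * t powr p \<le> S \<and> S \<le> t powr p)"
                  "(p < 0 \<or> 1 < p) \<Longrightarrow> t powr p \<le> S \<and> S \<le> K * t powr p"
                  "(0 < p \<and> p < 1) \<Longrightarrow> K * t powr p \<le> S \<and> S \<le> t powr p"
                  "p = 1 \<Longrightarrow> S = t \<and> K = 1"
  proof -
    show c1: "(p < 0 \<or> 1 < p) \<Longrightarrow> t powr p \<le> S \<and> S \<le> K * t powr p"
    proof -
      assume pp: "p < 0 \<or> 1 < p"
      then have pp': "p \<le> 0 \<or> 1 \<le> p" by auto
      have "t powr p \<le> S"
      proof -
        have "(\<Sum>i\<in>I. w i * ((t powr p - d * t) + d * x i)) \<le> S" unfolding S_def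
        proof (intro sum_mono mult_left_mono)
          fix i assume i: "i \<in> I"
          show "t powr p - d * t + d * x i \<le> x i powr p" using tan_cv[of "x i" t p] xp[OF i] tp pp' unfolding d_def by (simp add: algebra_simps)
          show "0 \<le> w i" using w0 i by simp
        qed
        then show ?thesis using jen_eq by simp
      qed
      moreover have "S \<le> K * t powr p"
      proof -
        have "S \<le> (\<Sum>i\<in>I. w i * (a powr p * \<alpha> + (a powr p * \<beta> / a) * x i))" unfolding S_def
        proof (intro sum_mono mult_left_mono)
          fix i assume i: "i \<in> I"
          have "x i powr p \<le> a powr p * (\<alpha> + \<beta> * (x i / a))"
            using chord_cv(1)[OF a h, of "x i" p] xb[OF i] pp unfolding \<alpha>_def \<beta>_def by auto
          then show "x i powr p \<le> a powr p * \<alpha> + a powr p * \<beta> / a * x i" unfolding ch_form .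
          show "0 \<le> w i" using w0 i by simp
        qed
        also have "\<dots> = a powr p * (\<alpha> + \<beta> * (t / a))" by (rule ch_eq)
        also have "\<dots> \<le> a powr p * (K * (t / a) powr p)"
          using kant_line(1)[OF h p0 _, of "t / a"] pp tp a unfolding K_def \<alpha>_def \<beta>_def
          by (intro mult_left_mono) auto
        finally show ?thesis using Kt by simp
      qed
      ultimately show ?thesis by simp
    qed
    show c2: "(0 < p \<and> p < 1) \<Longrightarrow> K * t powr p \<le> S \<and> S \<le> t powr p"
    proof -
      assume pp: "0 < p \<and> p < 1"
      have "S \<le> t powr p"
      proof -
        have "S \<le> (\<Sum>i\<in>I. w i * ((t powr p - d * t) + d * x i))" unfolding S_def
        proof (intro sum_mono mult_left_mono)
          fix i assume i: "i \<in> I"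
          show "x i powr p \<le> t powr p - d * t + d * x i" using tan_cc[of "x i" t p] xp[OF i] tp pp unfolding d_def by (simp add: algebra_simps)
          show "0 \<le> w i" using w0 i by simp
        qed
        then show ?thesis using jen_eq by simp
      qed
      moreover have "K * t powr p \<le> S"
      proof -
        have "a powr p * (K * (t / a) powr p) \<le> a powr p * (\<alpha> + \<beta> * (t / a))"
          using kant_line(2)[OF h p0 _, of "t / a"] pp tp a unfolding K_def \<alpha>_def \<beta>_def
          by (intro mult_left_mono) auto
        also have "\<dots> = (\<Sum>i\<in>I. w i * (a powr p * \<alpha> + (a powr p * \<beta> / a) * x i))" by (rule ch_eq[symmetric])
        also have "\<dots> \<le> S" unfolding S_def
        proof (intro sum_mono mult_left_mono)
          fix i assume i: "i \<in> I"
          have "a powr p * (\<alpha> + \<beta> * (x i / a)) \<le> x i powr p"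
            using chord_cv(2)[OF a h, of "x i" p] xb[OF i] pp unfolding \<alpha>_def \<beta>_def by auto
          then show "a powr p * \<alpha> + a powr p * \<beta> / a * x i \<le> x i powr p" unfolding ch_form .
          show "0 \<le> w i" using w0 i by simp
        qed
        finally show ?thesis using Kt by simp
      qed
      ultimately show ?thesis by simp
    qed
    show c3: "p = 1 \<Longrightarrow> S = t \<and> K = 1"
    proof -
      assume p1: "p = 1"
      have "S = t" unfolding S_def t_def p1 using xp by (intro sum.cong) (auto simp: less_imp_le)
      then show ?thesis using p1 unfolding K_def kantorovich_def by simp
    qed
    show "(t powr p \<le> S \<and> S \<le> K * t powr p) \<or> (K * t powr p \<le> S \<and> S \<le> t powr p)"
    proof (cases "p = 1")
      case True then show ?thesis using c3 tp by simp
    next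
      case False
      then have "(p < 0 \<or> 1 < p) \<or> (0 < p \<and> p < 1)" using p0 by auto
      then show ?thesis using c1 c2 by blast
    qed
  qed
  have tpp: "(t powr p) powr (1/p) = t" using tp p0 by (simp add: powr_powr)
  have Ktpp: "(K * t powr p) powr (1/p) = K powr (1/p) * t" using Kp tp by (simp add: powr_mult tpp)
  have tpos: "t powr p > 0" "K * t powr p > 0" using tp Kp by auto
  show "(p < 0 \<or> (0 < p \<and> p \<le> 1)) \<longrightarrow> kantorovich h p powr (1/p) * (\<Sum>i\<in>I. w i * x i) \<le> (\<Sum>i\<in>I. w i * x i powr p) powr (1/p) \<and> (\<Sum>i\<in>I. w i * x i powr p) powr (1/p) \<le> (\<Sum>i\<in>I. w i * x i)"
    unfolding t_def[symmetric] S_def[symmetric] K_def[symmetric]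
  proof
    assume pp: "p < 0 \<or> (0 < p \<and> p \<le> 1)"
    consider "p < 0" | "0 < p \<and> p < 1" | "p = 1" using pp by linarith
    then show "K powr (1 / p) * t \<le> S powr (1 / p) \<and> S powr (1 / p) \<le> t"
    proof cases
      case 1
      then have e: "1/p \<le> 0" by (simp add: divide_nonpos_neg less_imp_le)
      from fin_cases(2) 1 have b: "t powr p \<le> S" "S \<le> K * t powr p" by auto
      show ?thesis using powr_mono2'[OF e tpos(1) b(1)] powr_mono2'[OF e _ b(2)] tpos b tpp Ktpp by auto
    next
      case 2
      then have e: "1/p \<ge> 0" by simp
      from fin_cases(3) 2 have b: "K * t powr p \<le> S" "S \<le> t powr p" by auto
      show ?thesis using powr_mono2[OF e _ b(1)] powr_mono2[OF e _ b(2)] tpos b tpp Ktpp by auto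
    next
      case 3
      then show ?thesis using fin_cases(4) tp by simp
    qed
  qed
  show "1 \<le> p \<longrightarrow> (\<Sum>i\<in>I. w i * x i) \<le> (\<Sum>i\<in>I. w i * x i powr p) powr (1/p) \<and> (\<Sum>i\<in>I. w i * x i powr p) powr (1/p) \<le> kantorovich h p powr (1/p) * (\<Sum>i\<in>I. w i * x i)"
    unfolding t_def[symmetric] S_def[symmetric] K_def[symmetric]
  proof
    assume pp: "1 \<le> p"
    consider "1 < p" | "p = 1" using pp by linarith
    then show "t \<le> S powr (1 / p) \<and> S powr (1 / p) \<le> K powr (1 / p) * t"
    proof cases
      case 1
      then have e: "1/p \<ge> 0" by simp
      from fin_cases(2) 1 have b: "t powr p \<le> S" "S \<le> K * t powr p" by auto
      show ?thesis using powr_mono2[OF e _ b(1)] powr_mono2[OF e _ b(2)] tpos b tpp Ktpp by auto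
    next
      case 2
      then show ?thesis using fin_cases(4) tp by simp
    qed
  qed
qed



lemma conj_cnj[simp]: "conjugate (z::complex) = cnj z" by (simp add: conjugate_complex_def)

lemma adj_dim[simp]: "dim_row (adj A) = dim_col A" "dim_col (adj A) = dim_row A"
  unfolding adj_def by auto

lemma adj_index[simp]: "i < dim_col A \<Longrightarrow> j < dim_row A \<Longrightarrow> adj A $$ (i,j) = cnj (A $$ (j,i))"
  unfolding adj_def by auto

lemma adj_carrier[simp]: "A \<in> carrier_mat r c \<Longrightarrow> adj A \<in> carrier_mat c r"
  unfolding adj_def by auto

lemma adj_adj[simp]: "adj (adj A) = A"
  by (rule eq_matI) (auto simp: adj_def)

lemma adj_mult: assumes "A \<in> carrier_mat r n" "B \<in> carrier_mat n c"
  shows "adj (A * B) = adj B * adj A"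
  using assms by (intro eq_matI) (auto simp: scalar_prod_def cnj_sum mult.commute)

lemma adj_one[simp]: "adj (1\<^sub>m n) = 1\<^sub>m n"
  by (rule eq_matI) (auto simp: adj_def)

lemma adj_zero[simp]: "adj (0\<^sub>m r c) = 0\<^sub>m c r"
  by (rule eq_matI) (auto simp: adj_def)

lemma adj_add: assumes "A \<in> carrier_mat r c" "B \<in> carrier_mat r c"
  shows "adj (A + B) = adj A + adj B"
  using assms by (intro eq_matI) auto

lemma adj_minus: assumes "A \<in> carrier_mat r c" "B \<in> carrier_mat r c"
  shows "adj (A - B) = adj A - adj B"
  using assms by (intro eq_matI) auto

lemma adj_smult: "adj (k \<cdot>\<^sub>m A) = cnj k \<cdot>\<^sub>m adj A"
  by (intro eq_matI) auto

lemma adj_diag_real[simp]: "adj (mat_diag n (\<lambda>i. complex_of_real (f i))) = mat_diag n (\<lambda>i. complex_of_real (f i))"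
  by (intro eq_matI) (auto simp: mat_diag_def)

lemma unitary_carrier: "unitary n U \<Longrightarrow> U \<in> carrier_mat n n" unfolding unitary_def by simp

lemma unitary_left: "unitary n U \<Longrightarrow> adj U * U = 1\<^sub>m n" unfolding unitary_def by simp

lemma unitary_right: assumes "unitary n U" shows "U * adj U = 1\<^sub>m n"
proof -
  have U: "U \<in> carrier_mat n n" using assms unitary_carrier by auto
  show ?thesis using mat_mult_left_right_inverse[OF adj_carrier[OF U] U unitary_left[OF assms]] .
qed

definition qf :: "complex mat \<Rightarrow> complex vec \<Rightarrow> complex" where
  "qf X v = conjugate v \<bullet> (X *\<^sub>v v)"

lemma qf_sum: assumes "X \<in> carrier_mat n n" "v \<in> carrier_vec n"
  shows "qf X v = (\<Sum>a<n. \<Sum>b<n. cnj (v $ a) * X $$ (a,b) * v $ b)"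
  using assms unfolding qf_def by (auto simp: scalar_prod_def sum_distrib_left atLeast0LessThan mult.assoc intro!: sum.cong)


lemma row_adj: assumes "W \<in> carrier_mat n m" "i < m" shows "row (adj W) i = conjugate (col W i)"
  using assms by (intro eq_vecI) auto

lemma sandwich_entry: assumes W: "W \<in> carrier_mat n m" and X: "X \<in> carrier_mat n n" and i: "i < m" and j: "j < m"
  shows "(adj W * X * W) $$ (i,j) = conjugate (col W i) \<bullet> (X *\<^sub>v col W j)"
proof -
  have "adj W * X * W = adj W * (X * W)" using W X by (intro assoc_mult_mat) auto
  also have "\<dots> $$ (i,j) = row (adj W) i \<bullet> col (X * W) j" using W X i j by (intro index_mult_mat) auto
  also have "col (X * W) j = X *\<^sub>v col W j" using W X j by (intro col_mult2) auto
  also have "row (adj W) i = conjugate (col W i)" using W i by (rule row_adj)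
  finally show ?thesis .
qed

lemma cscalar_real_pos: assumes "v \<in> carrier_vec n" "v \<noteq> 0\<^sub>v n"
  shows "v \<bullet>c v = complex_of_real (Re (v \<bullet>c v)) \<and> Re (v \<bullet>c v) > 0"
proof -
  have "v \<bullet>c v > 0" using assms by simp
  then show ?thesis by (auto simp: less_complex_def complex_eq_iff)
qed

lemma normalize_vec: assumes v: "v \<in> carrier_vec n" "v \<noteq> 0\<^sub>v n"
  defines "u \<equiv> complex_of_real (1 / sqrt (Re (v \<bullet>c v))) \<cdot>\<^sub>v v"
  shows "u \<in> carrier_vec n" "u \<bullet>c u = 1"
proof -
  define r where "r = Re (v \<bullet>c v)"
  have r: "v \<bullet>c v = complex_of_real r" "r > 0" using cscalar_real_pos[OF v] unfolding r_def by auto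
  show "u \<in> carrier_vec n" unfolding u_def using v by simp
  have "u \<bullet>c u = complex_of_real (1 / sqrt r) * (cnj (complex_of_real (1 / sqrt r)) * (v \<bullet>c v))"
    unfolding u_def r_def[symmetric] using v
    by (simp add: conjugate_smult_vec scalar_prod_smult_distrib smult_scalar_prod_distrib)
  also have "\<dots> = 1"
  proof -
    have "sqrt r * sqrt r = r" using r by simp
    then have "complex_of_real (sqrt r) * complex_of_real (sqrt r) = complex_of_real r" by (metis of_real_mult)
    then show ?thesis using r by (simp add: field_simps)
  qed
  finally show "u \<bullet>c u = 1" .
qed


lemma onb_exists: assumes u: "u \<in> carrier_vec n" and u1: "u \<bullet>c u = 1"
  shows "\<exists>W. unitary n W \<and> col W 0 = u \<and> 0 < n"
proof -
  have u0: "u \<noteq> 0\<^sub>v n" using u1 by auto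
  have n0: "0 < n" using u u1 by (cases n) (auto simp: scalar_prod_def)
  interpret cof_vec_space n "TYPE(complex)" .
  define b where "b = basis_completion u"
  from basis_completion[OF u u0, folded b_def]
  have dist_b: "distinct b" and indep: "\<not> lin_dep (set b)" and bc: "set b \<subseteq> carrier_vec n"
    and hdb: "hd b = u" and len_b: "length b = n" by auto
  from hdb len_b n0 obtain vs where bv: "b = u # vs" by (cases b) auto
  define ws where "ws = gram_schmidt n b"
  from gram_schmidt_result[OF bc dist_b indep refl, folded ws_def]
  have orth: "corthogonal ws" and wsc: "set ws \<subseteq> carrier_vec n" and len: "length ws = n" by (auto simp: len_b)
  have hdws: "hd ws = u" unfolding ws_def bv using gram_schmidt_hd[OF u] by simp
  define nz where "nz = (\<lambda>w :: complex vec. complex_of_real (1 / sqrt (Re (w \<bullet>c w))) \<cdot>\<^sub>v w)"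
  define ws' where "ws' = map nz ws"
  have wsi: "ws ! i \<in> carrier_vec n" if "i < n" for i using wsc len that by auto
  have wsi0: "ws ! i \<noteq> 0\<^sub>v n" if "i < n" for i
  proof
    assume "ws ! i = 0\<^sub>v n"
    then have "ws ! i \<bullet>c ws ! i = 0" by simp
    then show False using corthogonalD[OF orth, of i i] len that by auto
  qed
  have ws'i: "ws' ! i = nz (ws ! i)" if "i < n" for i unfolding ws'_def using len that by simp
  have ws'c: "ws' ! i \<in> carrier_vec n" if "i < n" for i using ws'i[OF that] wsi[OF that] unfolding nz_def by simp
  have on: "ws' ! i \<bullet>c ws' ! j = (if i = j then 1 else 0)" if "i < n" "j < n" for i j
  proof (cases "i = j")
    case True
    then show ?thesis using normalize_vec(2)[OF wsi[OF that(1)] wsi0[OF that(1)]] ws'i[OF that(1)] unfolding nz_def by simp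
  next
    case False
    have "ws ! i \<bullet>c ws ! j = 0" using corthogonalD[OF orth, of i j] len that False by auto
    moreover
    have wi: "ws ! i \<in> carrier_vec n" and wj: "conjugate (ws ! j) \<in> carrier_vec n" using wsi that by auto
    have "\<And>a b. (a \<cdot>\<^sub>v ws ! i) \<bullet> (b \<cdot>\<^sub>v conjugate (ws ! j)) = a * b * (ws ! i \<bullet>c ws ! j)"
      using wi wj by (simp add: scalar_prod_smult_distrib[OF wi wj] smult_scalar_prod_distrib[of _ n] )
    ultimately show ?thesis using False ws'i that 
      unfolding nz_def by (simp add: conjugate_smult_vec)
  qed
  define W where "W = mat_of_cols n ws'"
  have len': "length ws' = n" unfolding ws'_def using len by simp
  have W: "W \<in> carrier_mat n n" unfolding W_def using mat_of_cols_carrier(1)[of n ws'] len' by simp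
  have colW: "col W i = ws' ! i" if "i < n" for i unfolding W_def using col_mat_of_cols[of i ws' n] len' ws'c that by simp
  have "adj W * W = 1\<^sub>m n"
  proof (rule eq_matI)
    fix i j assume i: "i < dim_row (1\<^sub>m n)" and j: "j < dim_col (1\<^sub>m n)"
    then have i: "i < n" and j: "j < n" by auto
    have "(adj W * W) $$ (i, j) = row (adj W) i \<bullet> col W j" using W i j by (intro index_mult_mat) auto
    also have "\<dots> = conjugate (ws' ! i) \<bullet> ws' ! j" using row_adj[OF W i] colW i j by simp
    also have "\<dots> = ws' ! j \<bullet>c ws' ! i" using conjugate_vec_sprod_comm[OF ws'c[OF j] ws'c[OF i]] by simp
    also have "\<dots> = 1\<^sub>m n $$ (i, j)" using on[OF j i] i j by auto
    finally show "(adj W * W) $$ (i, j) = 1\<^sub>m n $$ (i, j)" .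
  qed (use W in simp_all)
  then have "unitary n W" unfolding unitary_def using W by simp
  moreover have "col W 0 = u"
  proof -
    have "ws ! 0 = u" using hdws len n0 by (metis hd_conv_nth length_greater_0_conv)
    then show ?thesis using colW[OF n0] ws'i[OF n0] u1 unfolding nz_def by simp
  qed
  ultimately show ?thesis using n0 by blast
qed


lemma diag_split: "mat_diag (Suc n1) f = four_block_mat (mat_diag 1 (\<lambda>_. f 0)) (0\<^sub>m 1 n1) (0\<^sub>m n1 1) (mat_diag n1 (\<lambda>i. f (Suc i)))"
  by (rule eq_matI) (auto simp: mat_diag_def)

lemma assoc_sq: "A \<in> carrier_mat n n \<Longrightarrow> B \<in> carrier_mat n n \<Longrightarrow> C \<in> carrier_mat n n \<Longrightarrow> A * B * C = A * (B * C)"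
  by (rule assoc_mult_mat) auto

lemma spectral:
  fixes A :: "complex mat"
  assumes "A \<in> carrier_mat n n" "adj A = A"
  shows "\<exists>U lam. unitary n U \<and> A = U * mat_diag n (\<lambda>i. complex_of_real (lam i)) * adj U"
  using assms
proof (induction n arbitrary: A)
  case 0
  have "A = 1\<^sub>m 0 * mat_diag 0 (\<lambda>i. complex_of_real 0) * adj (1\<^sub>m 0)"
    using 0 by (intro eq_matI) auto
  moreover have "unitary 0 (1\<^sub>m 0)" unfolding unitary_def by simp
  ultimately show ?case by (intro exI[of _ "1\<^sub>m 0"] exI[of _ "\<lambda>_. 0"]) simp
next
  case (Suc n1 A)
  let ?n = "Suc n1"
  have A: "A \<in> carrier_mat ?n ?n" and hA: "adj A = A" using Suc by auto
  obtain e where "eigenvalue A e" using spectrum_non_empty[OF A] unfolding spectrum_def by auto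
  then obtain v where ev: "eigenvector A v e" unfolding eigenvalue_def by auto
  then have v: "v \<in> carrier_vec ?n" and v0: "v \<noteq> 0\<^sub>v ?n" and Av: "A *\<^sub>v v = e \<cdot>\<^sub>v v"
    unfolding eigenvector_def using A by auto
  define u where "u = complex_of_real (1 / sqrt (Re (v \<bullet>c v))) \<cdot>\<^sub>v v"
  have u: "u \<in> carrier_vec ?n" "u \<bullet>c u = 1" using normalize_vec[OF v v0] unfolding u_def by auto
  have Au: "A *\<^sub>v u = e \<cdot>\<^sub>v u" unfolding u_def using A v Av
    by (simp add: mult_mat_vec smult_smult_assoc mult.commute)
  obtain W where uW: "unitary ?n W" and W0: "col W 0 = u" using onb_exists[OF u] by auto
  have W: "W \<in> carrier_mat ?n ?n" using uW unitary_carrier by auto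
  have adjW: "adj W \<in> carrier_mat ?n ?n" using W by simp
  define A' where "A' = adj W * A * W"
  have A': "A' \<in> carrier_mat ?n ?n" unfolding A'_def using W A by auto
  have hA': "adj A' = A'"
  proof -
    have "adj A' = adj W * adj (adj W * A)" unfolding A'_def using W A by (intro adj_mult[of _ ?n ?n]) auto
    also have "adj (adj W * A) = adj A * adj (adj W)" using W A by (intro adj_mult[of _ ?n ?n]) auto
    finally show ?thesis unfolding A'_def using hA W A by (simp add: assoc_mult_mat[of _ ?n ?n _ ?n _ ?n])
  qed
  have A'ent: "A' $$ (i, j) = conjugate (col W i) \<bullet> (A *\<^sub>v col W j)" if "i < ?n" "j < ?n" for i j
    unfolding A'_def using sandwich_entry[OF W A that] .
  have colc: "col W i \<in> carrier_vec ?n" for i using col_dim[of W i] W by simp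
  have orth: "conjugate (col W i) \<bullet> col W j = (if i = j then 1 else 0)" if "i < ?n" "j < ?n" for i j
  proof -
    have "(adj W * W) $$ (i, j) = row (adj W) i \<bullet> col W j" using W that by (intro index_mult_mat) auto
    then show ?thesis using unitary_left[OF uW] row_adj[OF W that(1)] that by simp
  qed
  have col0: "A' $$ (i, 0) = (if i = 0 then e else 0)" if "i < ?n" for i
  proof -
    have "A' $$ (i, 0) = conjugate (col W i) \<bullet> (e \<cdot>\<^sub>v col W 0)" using A'ent[OF that] Au W0 by simp
    also have "\<dots> = e * (conjugate (col W i) \<bullet> col W 0)"
      by (rule scalar_prod_smult_distrib[of _ ?n]) (use colc in auto)
    finally show ?thesis using orth[OF that, of 0] by simp
  qed
  have herm_ent: "A' $$ (j, i) = cnj (A' $$ (i, j))" if "i < ?n" "j < ?n" for i j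
  proof -
    have "adj A' $$ (j, i) = cnj (A' $$ (i, j))" using A' that by simp
    then show ?thesis using hA' by simp
  qed
  have ereal: "e = complex_of_real (Re e)"
  proof -
    have h: "A' $$ (0,0) = e" using col0[of 0] by simp
    have "A' $$ (0,0) = cnj (A' $$ (0,0))" by (rule herm_ent) auto
    then have "e = cnj e" unfolding h .
    then show ?thesis by (simp add: complex_eq_iff)
  qed
  have row0: "A' $$ (0, j) = (if j = 0 then e else 0)" if "j < ?n" for j
  proof -
    have "A' $$ (0, j) = cnj (A' $$ (j, 0))" by (rule herm_ent[OF that]) simp
    also have "\<dots> = (if j = 0 then e else 0)" using col0[OF that] ereal by (cases "j = 0") (simp_all, metis complex_cnj_complex_of_real)
    finally show ?thesis .
  qed
  define A3 where "A3 = mat n1 n1 (\<lambda>(i,j). A' $$ (Suc i, Suc j))"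
  have A3: "A3 \<in> carrier_mat n1 n1" unfolding A3_def by simp
  have hA3: "adj A3 = A3"
  proof (rule eq_matI)
    fix i j assume "i < dim_row A3" "j < dim_col A3"
    then have i: "i < n1" and j: "j < n1" using A3 by auto
    have "adj A3 $$ (i, j) = cnj (A' $$ (Suc j, Suc i))" using i j A3 unfolding A3_def by simp
    also have "\<dots> = A' $$ (Suc i, Suc j)" by (rule herm_ent[symmetric]) (use i j in auto)
    finally show "adj A3 $$ (i, j) = A3 $$ (i, j)" unfolding A3_def using i j by simp
  qed (use A3 in auto)
  obtain U3 lam3 where uU3: "unitary n1 U3" and A3eq: "A3 = U3 * mat_diag n1 (\<lambda>i. complex_of_real (lam3 i)) * adj U3"
    using Suc.IH[OF A3 hA3] by auto
  have U3: "U3 \<in> carrier_mat n1 n1" using uU3 unitary_carrier by auto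
  define D3 where "D3 = mat_diag n1 (\<lambda>i. complex_of_real (lam3 i))"
  have D3: "D3 \<in> carrier_mat n1 n1" unfolding D3_def by simp
  define lam where "lam = (\<lambda>i. if i = 0 then Re e else lam3 (i - 1))"
  define D where "D = mat_diag ?n (\<lambda>i. complex_of_real (lam i))"
  define d where "d = mat_diag 1 (\<lambda>_. e)"
  have d: "d \<in> carrier_mat 1 1" unfolding d_def by simp
  have Dsplit: "D = four_block_mat d (0\<^sub>m 1 n1) (0\<^sub>m n1 1) D3"
    unfolding D_def D3_def d_def diag_split lam_def using ereal by simp
  define E where "E = four_block_mat (1\<^sub>m 1) (0\<^sub>m 1 n1) (0\<^sub>m n1 1) U3"
  have E: "E \<in> carrier_mat ?n ?n" unfolding E_def using four_block_carrier_mat[OF one_carrier_mat[of 1] U3, of "0\<^sub>m 1 n1" "0\<^sub>m n1 1"] by simp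
  have adjE: "adj E = four_block_mat (1\<^sub>m 1) (0\<^sub>m 1 n1) (0\<^sub>m n1 1) (adj U3)"
    unfolding E_def using U3 by (intro eq_matI) auto
  have c11: "1\<^sub>m 1 \<in> carrier_mat 1 1" and z1: "0\<^sub>m 1 n1 \<in> carrier_mat 1 n1" and z2: "0\<^sub>m n1 1 \<in> carrier_mat n1 1"
    by auto
  have aU3: "adj U3 \<in> carrier_mat n1 n1" using U3 by simp
  have EE: "adj E * E = 1\<^sub>m ?n"
    unfolding adjE unfolding E_def mult_four_block_mat[OF c11 z1 z2 aU3 c11 z1 z2 U3]
    using U3 unitary_left[OF uU3] four_block_one_mat[of 1 n1] by simp
  have A'eq: "A' = E * D * adj E"
  proof -
    have ED: "E * D = four_block_mat d (0\<^sub>m 1 n1) (0\<^sub>m n1 1) (U3 * D3)"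
      unfolding E_def Dsplit mult_four_block_mat[OF c11 z1 z2 U3 d z1 z2 D3]
      using U3 D3 d by simp
    have U3D3: "U3 * D3 \<in> carrier_mat n1 n1" using U3 D3 by simp
    have "E * D * adj E = four_block_mat d (0\<^sub>m 1 n1) (0\<^sub>m n1 1) (U3 * D3 * adj U3)"
      unfolding ED adjE mult_four_block_mat[OF d z1 z2 U3D3 c11 z1 z2 aU3]
      using U3 D3 d left_add_zero_mat[OF mult_carrier_mat[OF U3D3 aU3]] by simp
    also have "\<dots> = A'"
    proof (rule eq_matI)
      fix i j assume "i < dim_row A'" "j < dim_col A'"
      then have i: "i < ?n" and j: "j < ?n" using A' by auto
      show "four_block_mat d (0\<^sub>m 1 n1) (0\<^sub>m n1 1) (U3 * D3 * adj U3) $$ (i, j) = A' $$ (i, j)"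
        using i j d U3 D3 col0 row0 A3eq[folded D3_def, symmetric] unfolding d_def A3_def
        by (cases i; cases j) (auto simp: mat_diag_def)
    qed (use A' U3 D3 d in auto)
    finally show ?thesis by simp
  qed
  define U where "U = W * E"
  have U: "U \<in> carrier_mat ?n ?n" unfolding U_def using W E by simp
  have "adj U * U = 1\<^sub>m ?n"
  proof -
    have aE: "adj E \<in> carrier_mat ?n ?n" using E by simp
    have "adj U = adj E * adj W" unfolding U_def using W E by (rule adj_mult)
    have WE: "W * E \<in> carrier_mat ?n ?n" using W E by simp
    have "adj U * U = adj E * adj W * (W * E)" unfolding \<open>adj U = adj E * adj W\<close> unfolding U_def ..
    also have "\<dots> = adj E * (adj W * (W * E))" by (rule assoc_mult_mat[OF aE adjW WE])
    also have "adj W * (W * E) = (adj W * W) * E" by (rule assoc_mult_mat[OF adjW W E, symmetric])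
    also have "\<dots> = E" using unitary_left[OF uW] E by simp
    finally show ?thesis using EE by simp
  qed
  then have uU: "unitary ?n U" unfolding unitary_def using U by simp
  have A'c: "A' \<in> carrier_mat ?n ?n" by (rule A')
  have aE: "adj E \<in> carrier_mat ?n ?n" using E by simp
  have Dc: "D \<in> carrier_mat ?n ?n" unfolding D_def by simp
  have "A = (W * adj W) * A * (W * adj W)" using unitary_right[OF uW] A by simp
  also have "\<dots> = W * (adj W * A * W) * adj W"
  proof -
    have "(W * adj W) * A * (W * adj W) = W * (adj W * A) * (W * adj W)"
      using assoc_mult_mat[OF W adjW A] by simp
    also have "\<dots> = W * (adj W * A) * W * adj W"
      using assoc_mult_mat[of "W * (adj W * A)" ?n ?n W ?n "adj W" ?n] W adjW A by simp
    also have "W * (adj W * A) * W = W * (adj W * A * W)"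
      by (rule assoc_mult_mat[of W ?n ?n "adj W * A" ?n W ?n]) (use W adjW A in auto)
    finally show ?thesis .
  qed
  also have "\<dots> = W * (E * D * adj E) * adj W" unfolding A'_def[symmetric] A'eq ..
  also have "\<dots> = (W * E) * D * (adj E * adj W)"
  proof -
    have ED: "E * D \<in> carrier_mat ?n ?n" using E Dc by simp
    have "W * (E * D * adj E) = W * (E * D) * adj E" using assoc_mult_mat[OF W ED aE] by simp
    also have "W * (E * D) = W * E * D" using assoc_mult_mat[OF W E Dc] by simp
    finally have "W * (E * D * adj E) * adj W = W * E * D * adj E * adj W" by simp
    also have "\<dots> = (W * E) * D * (adj E * adj W)"
      using assoc_mult_mat[of "W * E * D" ?n ?n "adj E" ?n "adj W" ?n] W E Dc aE adjW by simp
    finally show ?thesis .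
  qed
  also have "\<dots> = U * D * adj U" unfolding U_def using adj_mult[OF W E] by simp
  finally show ?case using uU unfolding D_def by blast
qed


lemma powr_spec: assumes C: "C \<in> carrier_mat n n" and hC: "adj C = C"
  shows "\<exists>U lam. unitary n U \<and> C = U * mat_diag n (\<lambda>i. complex_of_real (lam i)) * adj U \<and>
     mat_powr C p = U * mat_diag n (\<lambda>i. complex_of_real (lam i powr p)) * adj U"
proof -
  have dr: "dim_row C = n" using C by simp
  obtain U0 lam0 where "unitary n U0 \<and> C = U0 * mat_diag n (\<lambda>i. complex_of_real (lam0 i)) * adj U0"
    using spectral[OF C hC] by auto
  then have ex: "\<exists>B. \<exists>U lam. unitary (dim_row C) U \<and>
      C = U * mat_diag (dim_row C) (\<lambda>i. complex_of_real (lam i)) * adj U \<and>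
      B = U * mat_diag (dim_row C) (\<lambda>i. complex_of_real (lam i powr p)) * adj U" unfolding dr by blast
  have mp: "mat_powr C p = (SOME B. \<exists>U lam. unitary (dim_row C) U \<and>
      C = U * mat_diag (dim_row C) (\<lambda>i. complex_of_real (lam i)) * adj U \<and>
      B = U * mat_diag (dim_row C) (\<lambda>i. complex_of_real (lam i powr p)) * adj U)" unfolding mat_powr_def ..
  show ?thesis using someI_ex[OF ex] unfolding mp[symmetric] unfolding dr .
qed

lemma unitary_sandwich: assumes uU: "unitary n U" and D: "D \<in> carrier_mat n n"
  shows "adj U * (U * D * adj U) * U = D"
proof -
  have U: "U \<in> carrier_mat n n" using uU unitary_carrier by auto
  have aU: "adj U \<in> carrier_mat n n" using U by simp
  have UD: "U * D \<in> carrier_mat n n" using U D by simp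
  have "adj U * (U * D * adj U) * U = adj U * (U * D * adj U * U)"
    by (rule assoc_mult_mat[OF aU _ U]) (use UD aU in simp)
  also have "U * D * adj U * U = U * D * (adj U * U)" by (rule assoc_mult_mat[OF UD aU U])
  also have "\<dots> = U * D" using unitary_left[OF uU] right_mult_one_mat[OF UD] by simp
  also have "adj U * (U * D) = (adj U * U) * D" by (rule assoc_mult_mat[OF aU U D, symmetric])
  also have "\<dots> = D" using unitary_left[OF uU] D by simp
  finally show ?thesis .
qed

lemma unitary_col: assumes uU: "unitary n U" and i: "i < n"
  shows "col U i \<in> carrier_vec n" "conjugate (col U i) \<bullet> col U i = 1"
proof -
  have U: "U \<in> carrier_mat n n" using uU unitary_carrier by auto
  show "col U i \<in> carrier_vec n" using col_dim[of U i] U by simp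
  have "(adj U * U) $$ (i, i) = row (adj U) i \<bullet> col U i" using U i by (intro index_mult_mat) auto
  then show "conjugate (col U i) \<bullet> col U i = 1" using unitary_left[OF uU] row_adj[OF U i] i by simp
qed

lemma eig_qf: assumes uU: "unitary n U" and i: "i < n"
  shows "qf (U * mat_diag n f * adj U) (col U i) = f i"
proof -
  have U: "U \<in> carrier_mat n n" using uU unitary_carrier by auto
  have X: "U * mat_diag n f * adj U \<in> carrier_mat n n" using mult_carrier_mat[OF mult_carrier_mat[OF U mat_diag_dim] adj_carrier[OF U]] .
  have "(adj U * (U * mat_diag n f * adj U) * U) $$ (i, i) = qf (U * mat_diag n f * adj U) (col U i)"
    unfolding qf_def by (rule sandwich_entry[OF U X i i])
  then show ?thesis unfolding unitary_sandwich[OF uU mat_diag_dim] using i by (simp add: mat_diag_def)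
qed

lemma qf_move: assumes U: "U \<in> carrier_mat n n" and v: "v \<in> carrier_vec n" and y: "y \<in> carrier_vec n"
  shows "conjugate v \<bullet> (U *\<^sub>v y) = conjugate (adj U *\<^sub>v v) \<bullet> y"
proof -
  have "conjugate v \<bullet> (U *\<^sub>v y) = (\<Sum>a<n. \<Sum>b<n. cnj (v $ a) * (U $$ (a, b) * y $ b))"
    using U v y by (auto simp: scalar_prod_def sum_distrib_left atLeast0LessThan intro!: sum.cong)
  also have "\<dots> = (\<Sum>b<n. \<Sum>a<n. cnj (v $ a) * (U $$ (a, b) * y $ b))" by (rule sum.swap)
  also have "\<dots> = (\<Sum>b<n. (\<Sum>a<n. cnj (v $ a) * U $$ (a, b)) * y $ b)"
    by (simp add: sum_distrib_right mult.assoc)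
  also have "\<dots> = conjugate (adj U *\<^sub>v v) \<bullet> y"
    using U v y by (auto simp: scalar_prod_def atLeast0LessThan cnj_sum mult.commute intro!: sum.cong)
  finally show ?thesis .
qed

lemma qf_conj_diag: assumes U: "U \<in> carrier_mat n n" and v: "v \<in> carrier_vec n"
  shows "qf (U * mat_diag n g * adj U) v = (\<Sum>i<n. g i * (cnj ((adj U *\<^sub>v v) $ i) * (adj U *\<^sub>v v) $ i))"
proof -
  define z where "z = adj U *\<^sub>v v"
  have z: "z \<in> carrier_vec n" unfolding z_def using mult_mat_vec_carrier[OF adj_carrier[OF U] v] .
  have "(U * mat_diag n g * adj U) *\<^sub>v v = U *\<^sub>v (mat_diag n g *\<^sub>v z)"
  proof -
    have UD: "U * mat_diag n g \<in> carrier_mat n n" using U by simp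
    have "(U * mat_diag n g * adj U) *\<^sub>v v = (U * mat_diag n g) *\<^sub>v z"
      unfolding z_def by (rule assoc_mult_mat_vec[OF UD adj_carrier[OF U] v])
    also have "\<dots> = U *\<^sub>v (mat_diag n g *\<^sub>v z)" by (rule assoc_mult_mat_vec[OF U mat_diag_dim z])
    finally show ?thesis .
  qed
  then have "qf (U * mat_diag n g * adj U) v = conjugate z \<bullet> (mat_diag n g *\<^sub>v z)"
  proof -
    have mz: "mat_diag n g *\<^sub>v z \<in> carrier_vec n" by (rule mult_mat_vec_carrier[OF mat_diag_dim z])
    show ?thesis unfolding qf_def \<open>(U * mat_diag n g * adj U) *\<^sub>v v = U *\<^sub>v (mat_diag n g *\<^sub>v z)\<close>
      using qf_move[OF U v mz] unfolding z_def .
  qed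
  also have "\<dots> = (\<Sum>i<n. g i * (cnj (z $ i) * z $ i))"
  proof -
    have "(mat_diag n g *\<^sub>v z) $ i = g i * z $ i" if i: "i < n" for i
    proof -
      have "(mat_diag n g *\<^sub>v z) $ i = (\<Sum>ia=0..<n. (if i = ia then g ia else 0) * z $ ia)"
        using z i by (simp add: mat_diag_def scalar_prod_def)
      also have "\<dots> = (\<Sum>ia=0..<n. if i = ia then g ia * z $ ia else 0)" by (rule sum.cong) auto
      also have "\<dots> = g i * z $ i" using i by simp
      finally show ?thesis .
    qed
    note md = this
    have "conjugate z \<bullet> (mat_diag n g *\<^sub>v z) = (\<Sum>i\<in>{0..<n}. conjugate z $ i * (mat_diag n g *\<^sub>v z) $ i)"
      unfolding scalar_prod_def by (simp add: mat_diag_def)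
    also have "\<dots> = (\<Sum>i\<in>{0..<n}. g i * (cnj (z $ i) * z $ i))"
    proof (rule sum.cong[OF refl])
      fix i assume "i \<in> {0..<n}"
      then have i: "i < n" by simp
      have "conjugate z $ i = cnj (z $ i)" using z i by simp
      then show "conjugate z $ i * (mat_diag n g *\<^sub>v z) $ i = g i * (cnj (z $ i) * z $ i)"
        unfolding md[OF i] by simp
    qed
    finally show ?thesis by (simp add: atLeast0LessThan)
  qed
  finally show ?thesis unfolding z_def .
qed


lemma conj_diag_carrier: "U \<in> carrier_mat n n \<Longrightarrow> U * mat_diag n g * adj U \<in> carrier_mat n n"
  using mult_carrier_mat[OF mult_carrier_mat[OF _ mat_diag_dim] adj_carrier] by blast

lemma herm_conj_diag: assumes U: "U \<in> carrier_mat n n"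
  shows "adj (U * mat_diag n (\<lambda>i. complex_of_real (g i)) * adj U) = U * mat_diag n (\<lambda>i. complex_of_real (g i)) * adj U"
proof -
  let ?D = "mat_diag n (\<lambda>i. complex_of_real (g i))"
  have UD: "U * ?D \<in> carrier_mat n n" using U by simp
  have "adj (U * ?D * adj U) = adj (adj U) * adj (U * ?D)" by (rule adj_mult[OF UD adj_carrier[OF U]])
  also have "adj (U * ?D) = adj ?D * adj U" by (rule adj_mult[OF U mat_diag_dim])
  finally have "adj (U * ?D * adj U) = U * (?D * adj U)" by simp
  also have "\<dots> = U * ?D * adj U" by (rule assoc_mult_mat[OF U mat_diag_dim adj_carrier[OF U], symmetric])
  finally show ?thesis .
qed

lemma psd_conj_diag: assumes U: "U \<in> carrier_mat n n" and g: "\<And>i. i < n \<Longrightarrow> 0 \<le> g i"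
  shows "psd (U * mat_diag n (\<lambda>i. complex_of_real (g i)) * adj U)"
proof -
  let ?X = "U * mat_diag n (\<lambda>i. complex_of_real (g i)) * adj U"
  have X: "?X \<in> carrier_mat n n" by (rule conj_diag_carrier[OF U])
  have dX: "dim_row ?X = n" using X U by simp
  have "hermitian ?X" unfolding hermitian_def dX using X herm_conj_diag[OF U] by simp
  moreover have "0 \<le> Re (conjugate v \<bullet> (?X *\<^sub>v v))" if v: "v \<in> carrier_vec n" for v
  proof -
    have "Re (conjugate v \<bullet> (?X *\<^sub>v v)) = Re (qf ?X v)" unfolding qf_def ..
    also have "\<dots> = (\<Sum>i<n. g i * Re (cnj ((adj U *\<^sub>v v) $ i) * (adj U *\<^sub>v v) $ i))"
      unfolding qf_conj_diag[OF U v] by (simp add: Re_sum)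
    also have "\<dots> \<ge> 0"
    proof (rule sum_nonneg)
      fix i assume "i \<in> {..<n}"
      then show "0 \<le> g i * Re (cnj ((adj U *\<^sub>v v) $ i) * (adj U *\<^sub>v v) $ i)"
        using g by (intro mult_nonneg_nonneg) auto
    qed
    finally show ?thesis .
  qed
  ultimately show ?thesis unfolding psd_def dX by simp
qed

context
  fixes n k :: nat and \<Phi> :: "complex mat \<Rightarrow> complex mat"
  assumes Phi: "unital_positive_linear_map n k \<Phi>"
begin

lemma phi_carrier: "A \<in> carrier_mat n n \<Longrightarrow> \<Phi> A \<in> carrier_mat k k"
  using Phi unfolding unital_positive_linear_map_def by blast
lemma phi_add: "A \<in> carrier_mat n n \<Longrightarrow> B \<in> carrier_mat n n \<Longrightarrow> \<Phi> (A + B) = \<Phi> A + \<Phi> B"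
  using Phi unfolding unital_positive_linear_map_def by blast
lemma phi_smult: "A \<in> carrier_mat n n \<Longrightarrow> \<Phi> (c \<cdot>\<^sub>m A) = c \<cdot>\<^sub>m \<Phi> A"
  using Phi unfolding unital_positive_linear_map_def by blast
lemma phi_psd: "A \<in> carrier_mat n n \<Longrightarrow> psd A \<Longrightarrow> psd (\<Phi> A)"
  using Phi unfolding unital_positive_linear_map_def by blast
lemma phi_one: "\<Phi> (1\<^sub>m n) = 1\<^sub>m k"
  using Phi unfolding unital_positive_linear_map_def by blast
lemma phi_zero: "\<Phi> (0\<^sub>m n n) = 0\<^sub>m k k"
proof -
  have "\<Phi> (0\<^sub>m n n) = \<Phi> (0 \<cdot>\<^sub>m 0\<^sub>m n n)" by simp
  also have "\<dots> = 0 \<cdot>\<^sub>m \<Phi> (0\<^sub>m n n)" by (rule phi_smult) simp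
  also have "\<dots> = 0\<^sub>m k k" using phi_carrier[of "0\<^sub>m n n"] by (intro eq_matI) auto
  finally show ?thesis .
qed

end

lemma qf_add: assumes "X \<in> carrier_mat k k" "Y \<in> carrier_mat k k" "v \<in> carrier_vec k"
  shows "qf (X + Y) v = qf X v + qf Y v"
  unfolding qf_def using assms
  by (simp add: add_mult_distrib_mat_vec[of _ k k] scalar_prod_add_distrib[of _ k])

lemma qf_smult: assumes "X \<in> carrier_mat k k" "v \<in> carrier_vec k"
  shows "qf (c \<cdot>\<^sub>m X) v = c * qf X v"
proof -
  have "(c \<cdot>\<^sub>m X) *\<^sub>v v = c \<cdot>\<^sub>v (X *\<^sub>v v)" using assms by (intro eq_vecI) (auto simp: scalar_prod_def sum_distrib_left mult.assoc)
  then show ?thesis unfolding qf_def using assms by (simp add: scalar_prod_smult_distrib[of _ k])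
qed

lemma qf_zero: assumes "v \<in> carrier_vec k" shows "qf (0\<^sub>m k k) v = 0"
  unfolding qf_def using assms by (simp add: scalar_prod_def)

lemma qf_one: assumes "v \<in> carrier_vec k" shows "qf (1\<^sub>m k) v = conjugate v \<bullet> v"
  unfolding qf_def using assms by simp

lemma qf_minus: assumes "X \<in> carrier_mat k k" "Y \<in> carrier_mat k k" "v \<in> carrier_vec k"
  shows "qf (X - Y) v = qf X v - qf Y v"
proof -
  have "X - Y = X + (-1) \<cdot>\<^sub>m Y" using assms by (intro eq_matI) auto
  then show ?thesis using assms qf_add[of X k "(-1) \<cdot>\<^sub>m Y" v] qf_smult[of Y k v "-1"] by simp
qed


lemma phi_decomp:
  assumes Phi: "unital_positive_linear_map n k \<Phi>" and U: "U \<in> carrier_mat n n" and v: "v \<in> carrier_vec k"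
  shows "qf (\<Phi> (U * mat_diag n g * adj U)) v = (\<Sum>i<n. g i * qf (\<Phi> (U * mat_diag n (\<lambda>l. if l = i then 1 else 0) * adj U)) v)"
proof -
  define P where "P i = U * mat_diag n (\<lambda>l. if l = i then 1 else 0) * adj U" for i
  have aU: "adj U \<in> carrier_mat n n" using U by simp
  have gen: "qf (\<Phi> (U * mat_diag n (\<lambda>l. if l < j then g l else 0) * adj U)) v = (\<Sum>i<j. g i * qf (\<Phi> (P i)) v)" for j
  proof (induction j)
    case 0
    have "mat_diag n (\<lambda>l. if l < 0 then g l else 0) = 0\<^sub>m n n" by (intro eq_matI) (auto simp: mat_diag_def)
    moreover have "U * 0\<^sub>m n n * adj U = 0\<^sub>m n n" using U aU by simp
    ultimately show ?case using phi_zero[OF Phi] qf_zero[OF v] by simp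
  next
    case (Suc j)
    define D1 where "D1 = mat_diag n (\<lambda>l. if l < j then g l else 0)"
    define D2 where "D2 = mat_diag n (\<lambda>l. if l = j then 1 else (0::complex))"
    have D1: "D1 \<in> carrier_mat n n" and D2: "D2 \<in> carrier_mat n n" unfolding D1_def D2_def by auto
    have split: "mat_diag n (\<lambda>l. if l < Suc j then g l else 0) = D1 + g j \<cdot>\<^sub>m D2"
      unfolding D1_def D2_def by (intro eq_matI) (auto simp: mat_diag_def less_Suc_eq)
    have UD1: "U * D1 \<in> carrier_mat n n" and UD2: "U * D2 \<in> carrier_mat n n" using U D1 D2 by auto
    have "U * (D1 + g j \<cdot>\<^sub>m D2) * adj U = U * D1 * adj U + g j \<cdot>\<^sub>m (U * D2 * adj U)"
    proof -
      have "U * (D1 + g j \<cdot>\<^sub>m D2) = U * D1 + g j \<cdot>\<^sub>m (U * D2)"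
        using U D1 D2 by (simp add: mult_add_distrib_mat[of _ n n] mult_smult_distrib[of _ n n])
      moreover have "(U * D1 + g j \<cdot>\<^sub>m (U * D2)) * adj U = U * D1 * adj U + g j \<cdot>\<^sub>m (U * D2 * adj U)"
        using UD1 UD2 aU by (simp add: add_mult_distrib_mat[of _ n n] mult_smult_assoc_mat[of _ n n])
      ultimately show ?thesis by simp
    qed
    moreover have c1: "U * D1 * adj U \<in> carrier_mat n n" and c2: "U * D2 * adj U \<in> carrier_mat n n"
      using UD1 UD2 aU by auto
    ultimately have "\<Phi> (U * mat_diag n (\<lambda>l. if l < Suc j then g l else 0) * adj U) = \<Phi> (U * D1 * adj U) + g j \<cdot>\<^sub>m \<Phi> (P j)"
      unfolding split using phi_add[OF Phi c1, of "g j \<cdot>\<^sub>m (U * D2 * adj U)"] phi_smult[OF Phi c2] c2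
      unfolding P_def D2_def by simp
    moreover have "\<Phi> (U * D1 * adj U) \<in> carrier_mat k k" "\<Phi> (P j) \<in> carrier_mat k k"
      using phi_carrier[OF Phi c1] phi_carrier[OF Phi c2] unfolding P_def D2_def by auto
    ultimately have "qf (\<Phi> (U * mat_diag n (\<lambda>l. if l < Suc j then g l else 0) * adj U)) v
        = qf (\<Phi> (U * D1 * adj U)) v + g j * qf (\<Phi> (P j)) v"
      using qf_add[of _ k _ v] qf_smult[of _ k v] v by simp
    then show ?case using Suc.IH unfolding D1_def by simp
  qed
  have "mat_diag n (\<lambda>l. if l < n then g l else 0) = mat_diag n g" by (intro eq_matI) (auto simp: mat_diag_def)
  then show ?thesis using gen[of n] unfolding P_def by simp
qed

lemma mtrace_cyc: assumes A: "A \<in> carrier_mat r c" and B: "B \<in> carrier_mat c r"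
  shows "mtrace (A * B) = mtrace (B * A)"
proof -
  have "mtrace (A * B) = (\<Sum>i<r. \<Sum>l<c. A $$ (i, l) * B $$ (l, i))"
    unfolding mtrace_def using A B by (auto simp: scalar_prod_def atLeast0LessThan intro!: sum.cong)
  also have "\<dots> = (\<Sum>l<c. \<Sum>i<r. B $$ (l, i) * A $$ (i, l))" by (subst sum.swap) (simp add: mult.commute)
  also have "\<dots> = mtrace (B * A)"
    unfolding mtrace_def using A B by (auto simp: scalar_prod_def atLeast0LessThan intro!: sum.cong)
  finally show ?thesis .
qed

lemma mtrace_add: assumes "X \<in> carrier_mat k k" "Y \<in> carrier_mat k k"
  shows "mtrace (X + Y) = mtrace X + mtrace Y"
  unfolding mtrace_def using assms by (simp add: sum.distrib)

lemma trace_qf: assumes uV: "unitary k V" and X: "X \<in> carrier_mat k k"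
  shows "mtrace X = (\<Sum>j<k. qf X (col V j))"
proof -
  have V: "V \<in> carrier_mat k k" using uV unitary_carrier by auto
  have aV: "adj V \<in> carrier_mat k k" using V by simp
  have XV: "X * V \<in> carrier_mat k k" using X V by simp
  have "mtrace X = mtrace (X * (V * adj V))" using unitary_right[OF uV] X by simp
  also have "X * (V * adj V) = (X * V) * adj V" by (rule assoc_mult_mat[OF X V aV, symmetric])
  also have "mtrace \<dots> = mtrace (adj V * (X * V))" by (rule mtrace_cyc[OF XV aV])
  also have "adj V * (X * V) = adj V * X * V" by (rule assoc_mult_mat[OF aV X V, symmetric])
  also have "mtrace (adj V * X * V) = (\<Sum>j<k. (adj V * X * V) $$ (j, j))" unfolding mtrace_def using aV X V by simp
  also have "\<dots> = (\<Sum>j<k. qf X (col V j))" unfolding qf_def using sandwich_entry[OF V X] by simp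
  finally show ?thesis .
qed

lemma trace_diag: assumes uV: "unitary k V"
  shows "mtrace (V * mat_diag k g * adj V) = (\<Sum>j<k. g j)"
proof -
  have V: "V \<in> carrier_mat k k" using uV unitary_carrier by auto
  have aV: "adj V \<in> carrier_mat k k" using V by simp
  have VD: "V * mat_diag k g \<in> carrier_mat k k" using V by simp
  have "mtrace (V * mat_diag k g * adj V) = mtrace (adj V * (V * mat_diag k g))" by (rule mtrace_cyc[OF VD aV])
  also have "adj V * (V * mat_diag k g) = (adj V * V) * mat_diag k g" by (rule assoc_mult_mat[OF aV V mat_diag_dim, symmetric])
  also have "\<dots> = mat_diag k g" using unitary_left[OF uV] left_mult_one_mat[OF mat_diag_dim] by simp
  also have "mtrace (mat_diag k g) = (\<Sum>j<k. g j)" unfolding mtrace_def by (simp add: mat_diag_def)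
  finally show ?thesis .
qed


lemma loewner_lower: assumes X: "X \<in> carrier_mat n n" and L: "loewner_le (complex_of_real c \<cdot>\<^sub>m 1\<^sub>m n) X"
  and v: "v \<in> carrier_vec n" and v1: "conjugate v \<bullet> v = 1"
  shows "c \<le> Re (qf X v)"
proof -
  have C: "complex_of_real c \<cdot>\<^sub>m 1\<^sub>m n \<in> carrier_mat n n" by simp
  have "psd (X - complex_of_real c \<cdot>\<^sub>m 1\<^sub>m n)" using L unfolding loewner_le_def by blast
  moreover have "dim_row (X - complex_of_real c \<cdot>\<^sub>m 1\<^sub>m n) = n" using X by simp
  ultimately have "0 \<le> Re (qf (X - complex_of_real c \<cdot>\<^sub>m 1\<^sub>m n) v)" unfolding psd_def qf_def using v by auto
  also have "qf (X - complex_of_real c \<cdot>\<^sub>m 1\<^sub>m n) v = qf X v - complex_of_real c"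
    using qf_minus[OF X C v] qf_smult[OF one_carrier_mat v] qf_one[OF v] v1 by simp
  finally show ?thesis by simp
qed

lemma loewner_upper: assumes X: "X \<in> carrier_mat n n" and L: "loewner_le X (complex_of_real c \<cdot>\<^sub>m 1\<^sub>m n)"
  and v: "v \<in> carrier_vec n" and v1: "conjugate v \<bullet> v = 1"
  shows "Re (qf X v) \<le> c"
proof -
  have C: "complex_of_real c \<cdot>\<^sub>m 1\<^sub>m n \<in> carrier_mat n n" by simp
  have "psd (complex_of_real c \<cdot>\<^sub>m 1\<^sub>m n - X)" using L unfolding loewner_le_def by blast
  moreover have "dim_row (complex_of_real c \<cdot>\<^sub>m 1\<^sub>m n - X) = n" using X by simp
  ultimately have "0 \<le> Re (qf (complex_of_real c \<cdot>\<^sub>m 1\<^sub>m n - X) v)" unfolding psd_def qf_def using v by auto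
  also have "qf (complex_of_real c \<cdot>\<^sub>m 1\<^sub>m n - X) v = complex_of_real c - qf X v"
    using qf_minus[OF C X v] qf_smult[OF one_carrier_mat v] qf_one[OF v] v1 by simp
  finally show ?thesis by simp
qed

lemma key:
  assumes C: "C \<in> carrier_mat n n" and hC: "adj C = C"
    and bnd: "\<And>v. v \<in> carrier_vec n \<Longrightarrow> conjugate v \<bullet> v = 1 \<Longrightarrow> a \<le> Re (qf C v) \<and> Re (qf C v) \<le> b"
    and Phi: "unital_positive_linear_map n k \<Phi>"
  shows "\<exists>w x. (\<forall>i<n. a \<le> x i \<and> x i \<le> b) \<and> (\<forall>j<k. \<forall>i<n. 0 \<le> w j i) \<and> (\<forall>j<k. (\<Sum>i<n. w j i) = 1) \<and>
     trPhi \<Phi> C p = (\<Sum>j<k. (\<Sum>i<n. w j i * x i powr p) powr (1/p)) \<and>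
     Re (mtrace (\<Phi> C)) = (\<Sum>j<k. \<Sum>i<n. w j i * x i)"
proof -
  obtain U lam where uU: "unitary n U" and Ceq: "C = U * mat_diag n (\<lambda>i. complex_of_real (lam i)) * adj U"
    and Cp: "mat_powr C p = U * mat_diag n (\<lambda>i. complex_of_real (lam i powr p)) * adj U"
    using powr_spec[OF C hC, of p] by auto
  have U: "U \<in> carrier_mat n n" using uU unitary_carrier by auto
  have xb: "a \<le> lam i \<and> lam i \<le> b" if i: "i < n" for i
  proof -
    have "qf C (col U i) = complex_of_real (lam i)" unfolding Ceq by (rule eig_qf[OF uU i])
    then show ?thesis using bnd[OF unitary_col[OF uU i]] by simp
  qed
  define P where "P i = U * mat_diag n (\<lambda>l. if l = i then 1 else 0) * adj U" for i
  have Pc: "P i \<in> carrier_mat n n" for i unfolding P_def by (rule conj_diag_carrier[OF U])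
  have Ppsd: "psd (\<Phi> (P i))" for i
  proof -
    have e: "(\<lambda>l. if l = i then 1 else (0::complex)) = (\<lambda>l. complex_of_real (if l = i then 1 else 0))" by auto
    have "P i = U * mat_diag n (\<lambda>l. complex_of_real (if l = i then 1 else 0)) * adj U"
      unfolding P_def e ..
    then have "psd (P i)" using psd_conj_diag[OF U, of "\<lambda>l. if l = i then 1 else 0"] by simp
    then show ?thesis using phi_psd[OF Phi Pc] by simp
  qed
  define Y where "Y = \<Phi> (mat_powr C p)"
  have Cpc: "mat_powr C p \<in> carrier_mat n n" unfolding Cp by (rule conj_diag_carrier[OF U])
  have Y: "Y \<in> carrier_mat k k" unfolding Y_def by (rule phi_carrier[OF Phi Cpc])
  have "psd (mat_powr C p)" unfolding Cp by (rule psd_conj_diag[OF U]) simp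
  then have "psd Y" unfolding Y_def by (rule phi_psd[OF Phi Cpc])
  then have hY: "adj Y = Y" unfolding psd_def hermitian_def by simp
  obtain V mu where uV: "unitary k V" and Yeq: "Y = V * mat_diag k (\<lambda>i. complex_of_real (mu i)) * adj V"
    and Yp: "mat_powr Y (1/p) = V * mat_diag k (\<lambda>i. complex_of_real (mu i powr (1/p))) * adj V"
    using powr_spec[OF Y hY, of "1/p"] by auto
  define w where "w j i = Re (qf (\<Phi> (P i)) (col V j))" for j i
  have vj: "col V j \<in> carrier_vec k" "conjugate (col V j) \<bullet> col V j = 1" if "j < k" for j
    using unitary_col[OF uV that] by auto
  have w0: "0 \<le> w j i" if "j < k" for j i
  proof -
    have "dim_row (\<Phi> (P i)) = k" using phi_carrier[OF Phi Pc[of i]] by simp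
    then show ?thesis using Ppsd[of i] vj[OF that] unfolding psd_def w_def qf_def by auto
  qed
  have decomp: "qf (\<Phi> (U * mat_diag n g * adj U)) (col V j) = (\<Sum>i<n. g i * qf (\<Phi> (P i)) (col V j))" if "j < k" for g j
    unfolding P_def by (rule phi_decomp[OF Phi U vj(1)[OF that]])
  have w1: "(\<Sum>i<n. w j i) = 1" if j: "j < k" for j
  proof -
    have "U * mat_diag n (\<lambda>_. 1) * adj U = 1\<^sub>m n" using unitary_right[OF uU] U by simp
    then have "qf (\<Phi> (1\<^sub>m n)) (col V j) = (\<Sum>i<n. qf (\<Phi> (P i)) (col V j))" using decomp[OF j, of "\<lambda>_. 1"] by simp
    then have "(\<Sum>i<n. qf (\<Phi> (P i)) (col V j)) = 1" using phi_one[OF Phi] qf_one[OF vj(1)[OF j]] vj(2)[OF j] by simp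
    then show ?thesis unfolding w_def by (metis Re_sum one_complex.simps(1))
  qed
  have mu: "mu j = (\<Sum>i<n. w j i * lam i powr p)" if j: "j < k" for j
  proof -
    have "qf Y (col V j) = complex_of_real (mu j)" unfolding Yeq by (rule eig_qf[OF uV j])
    moreover have "qf Y (col V j) = (\<Sum>i<n. complex_of_real (lam i powr p) * qf (\<Phi> (P i)) (col V j))"
      unfolding Y_def Cp by (rule decomp[OF j])
    ultimately have "complex_of_real (mu j) = (\<Sum>i<n. complex_of_real (lam i powr p) * qf (\<Phi> (P i)) (col V j))" by simp
    then have "mu j = Re (\<Sum>i<n. complex_of_real (lam i powr p) * qf (\<Phi> (P i)) (col V j))" by (metis Re_complex_of_real)
    then show ?thesis unfolding w_def by (simp add: Re_sum mult.commute)
  qed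
  have tr: "trPhi \<Phi> C p = (\<Sum>j<k. (\<Sum>i<n. w j i * lam i powr p) powr (1/p))"
  proof -
    have "trPhi \<Phi> C p = Re (mtrace (mat_powr Y (1/p)))" unfolding trPhi_def Y_def ..
    also have "\<dots> = Re (\<Sum>j<k. complex_of_real (mu j powr (1/p)))" unfolding Yp trace_diag[OF uV] ..
    also have "\<dots> = (\<Sum>j<k. mu j powr (1/p))" by (simp add: Re_sum)
    also have "\<dots> = (\<Sum>j<k. (\<Sum>i<n. w j i * lam i powr p) powr (1/p))" using mu by simp
    finally show ?thesis .
  qed
  have T: "Re (mtrace (\<Phi> C)) = (\<Sum>j<k. \<Sum>i<n. w j i * lam i)"
  proof -
    have PC: "\<Phi> C \<in> carrier_mat k k" by (rule phi_carrier[OF Phi C])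
    have "Re (mtrace (\<Phi> C)) = (\<Sum>j<k. Re (qf (\<Phi> C) (col V j)))" unfolding trace_qf[OF uV PC] by (simp add: Re_sum)
    also have "\<dots> = (\<Sum>j<k. \<Sum>i<n. w j i * lam i)"
    proof (rule sum.cong[OF refl])
      fix j assume "j \<in> {..<k}"
      then have j: "j < k" by simp
      have "qf (\<Phi> C) (col V j) = (\<Sum>i<n. complex_of_real (lam i) * qf (\<Phi> (P i)) (col V j))"
        unfolding Ceq by (rule decomp[OF j])
      then show "Re (qf (\<Phi> C) (col V j)) = (\<Sum>i<n. w j i * lam i)" unfolding w_def by (simp add: Re_sum mult.commute)
    qed
    finally show ?thesis .
  qed
  show ?thesis
    by (rule exI[of _ w], rule exI[of _ lam]) (use xb w0 w1 tr T in auto)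
qed



lemma trace_bounds:
  fixes a h p :: real
  assumes C: "C \<in> carrier_mat n n" and hC: "adj C = C"
    and bnd: "\<And>v. v \<in> carrier_vec n \<Longrightarrow> conjugate v \<bullet> v = 1 \<Longrightarrow> a \<le> Re (qf C v) \<and> Re (qf C v) \<le> a * h"
    and Phi: "unital_positive_linear_map n k \<Phi>" and a: "a > 0" and h: "h > 1" and p0: "p \<noteq> 0"
  shows "(p < 0 \<or> (0 < p \<and> p \<le> 1)) \<longrightarrow> kantorovich h p powr (1/p) * Re (mtrace (\<Phi> C)) \<le> trPhi \<Phi> C p \<and> trPhi \<Phi> C p \<le> Re (mtrace (\<Phi> C))"
    and "1 \<le> p \<longrightarrow> Re (mtrace (\<Phi> C)) \<le> trPhi \<Phi> C p \<and> trPhi \<Phi> C p \<le> kantorovich h p powr (1/p) * Re (mtrace (\<Phi> C))"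
proof -
  obtain w x where xb: "\<forall>i<n. a \<le> x i \<and> x i \<le> a * h" and w0: "\<forall>j<k. \<forall>i<n. 0 \<le> w j i"
    and w1: "\<forall>j<k. (\<Sum>i<n. w j i) = 1"
    and tr: "trPhi \<Phi> C p = (\<Sum>j<k. (\<Sum>i<n. w j i * x i powr p) powr (1/p))"
    and T: "Re (mtrace (\<Phi> C)) = (\<Sum>j<k. \<Sum>i<n. w j i * x i)"
    using key[OF C hC bnd Phi, of p] by blast
  define K1 where "K1 = kantorovich h p powr (1/p)"
  define t where "t j = (\<Sum>i<n. w j i * x i)" for j
  define s where "s j = (\<Sum>i<n. w j i * x i powr p) powr (1/p)" for j
  have sc: "((p < 0 \<or> (0 < p \<and> p \<le> 1)) \<longrightarrow> K1 * t j \<le> s j \<and> s j \<le> t j) \<and>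
            (1 \<le> p \<longrightarrow> t j \<le> s j \<and> s j \<le> K1 * t j)" if j: "j < k" for j
    using scal_core[OF a h p0, of "{..<n}" x "w j"] xb w0 w1 j unfolding K1_def t_def s_def by auto
  have trs: "trPhi \<Phi> C p = (\<Sum>j<k. s j)" unfolding tr s_def ..
  have Tt: "Re (mtrace (\<Phi> C)) = (\<Sum>j<k. t j)" unfolding T t_def ..
  show "(p < 0 \<or> (0 < p \<and> p \<le> 1)) \<longrightarrow> kantorovich h p powr (1/p) * Re (mtrace (\<Phi> C)) \<le> trPhi \<Phi> C p \<and> trPhi \<Phi> C p \<le> Re (mtrace (\<Phi> C))"
    unfolding K1_def[symmetric] trs Tt
  proof
    assume pp: "p < 0 \<or> (0 < p \<and> p \<le> 1)"
    have "K1 * (\<Sum>j<k. t j) = (\<Sum>j<k. K1 * t j)" by (rule sum_distrib_left)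
    also have "\<dots> \<le> (\<Sum>j<k. s j)" by (rule sum_mono) (use sc pp in auto)
    finally show "K1 * (\<Sum>j<k. t j) \<le> (\<Sum>j<k. s j) \<and> (\<Sum>j<k. s j) \<le> (\<Sum>j<k. t j)"
      using sum_mono[of "{..<k}" s t] sc pp by auto
  qed
  show "1 \<le> p \<longrightarrow> Re (mtrace (\<Phi> C)) \<le> trPhi \<Phi> C p \<and> trPhi \<Phi> C p \<le> kantorovich h p powr (1/p) * Re (mtrace (\<Phi> C))"
    unfolding K1_def[symmetric] trs Tt
  proof
    assume pp: "1 \<le> p"
    have "(\<Sum>j<k. s j) \<le> (\<Sum>j<k. K1 * t j)" by (rule sum_mono) (use sc pp in auto)
    also have "\<dots> = K1 * (\<Sum>j<k. t j)" by (rule sum_distrib_left[symmetric])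
    finally show "(\<Sum>j<k. t j) \<le> (\<Sum>j<k. s j) \<and> (\<Sum>j<k. s j) \<le> K1 * (\<Sum>j<k. t j)"
      using sum_mono[of "{..<k}" t s] sc pp by auto
  qed
qed

theorem theorem4p8:
  fixes n k :: nat and A B :: "complex mat" and \<Phi> :: "complex mat \<Rightarrow> complex mat"
    and m M p :: real
  assumes A: "A \<in> carrier_mat n n" and B: "B \<in> carrier_mat n n"
    and pdA: "pd A" and pdB: "pd B"
    and m: "0 < m" and mM: "m < M"
    and AmI: "loewner_le (complex_of_real m \<cdot>\<^sub>m 1\<^sub>m n) A"
    and AMI: "loewner_le A (complex_of_real M \<cdot>\<^sub>m 1\<^sub>m n)"
    and BmI: "loewner_le (complex_of_real m \<cdot>\<^sub>m 1\<^sub>m n) B"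
    and BMI: "loewner_le B (complex_of_real M \<cdot>\<^sub>m 1\<^sub>m n)"
    and Phi: "unital_positive_linear_map n k \<Phi>"
  shows "((p < 0 \<or> (0 < p \<and> p \<le> 1)) \<longrightarrow>
           kantorovich (M / m) p powr (1 / p) * (trPhi \<Phi> A p + trPhi \<Phi> B p) \<le> trPhi \<Phi> (A + B) p \<and>
           trPhi \<Phi> (A + B) p \<le> kantorovich (M / m) p powr (- 1 / p) * (trPhi \<Phi> A p + trPhi \<Phi> B p)) \<and>
         (1 \<le> p \<longrightarrow>
           kantorovich (M / m) p powr (- 1 / p) * (trPhi \<Phi> A p + trPhi \<Phi> B p) \<le> trPhi \<Phi> (A + B) p \<and>
           trPhi \<Phi> (A + B) p \<le> kantorovich (M / m) p powr (1 / p) * (trPhi \<Phi> A p + trPhi \<Phi> B p))"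
proof -
  have hA: "adj A = A" using pdA unfolding pd_def hermitian_def by simp
  have hB: "adj B = B" using pdB unfolding pd_def hermitian_def by simp
  have AB: "A + B \<in> carrier_mat n n" using A B by simp
  have hAB: "adj (A + B) = A + B" using adj_add[OF A B] hA hB by simp
  define h where "h = M / m"
  have h: "h > 1" unfolding h_def using m mM by simp
  have mh: "m * h = M" unfolding h_def using m by simp
  have m2h: "(2 * m) * h = 2 * M" unfolding h_def using m by simp
  have bA: "m \<le> Re (qf A v) \<and> Re (qf A v) \<le> m * h" if "v \<in> carrier_vec n" "conjugate v \<bullet> v = 1" for v
    using loewner_lower[OF A AmI that] loewner_upper[OF A AMI that] mh by simp
  have bB: "m \<le> Re (qf B v) \<and> Re (qf B v) \<le> M" if "v \<in> carrier_vec n" "conjugate v \<bullet> v = 1" for v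
    using loewner_lower[OF B BmI that] loewner_upper[OF B BMI that] by simp
  have bAB: "2 * m \<le> Re (qf (A + B) v) \<and> Re (qf (A + B) v) \<le> (2 * m) * h" if v: "v \<in> carrier_vec n" "conjugate v \<bullet> v = 1" for v
  proof -
    have "qf (A + B) v = qf A v + qf B v" by (rule qf_add[OF A B v(1)])
    then show ?thesis using bA[OF v] bB[OF v] m2h mh by simp
  qed
  have PA: "\<Phi> A \<in> carrier_mat k k" and PB: "\<Phi> B \<in> carrier_mat k k" using phi_carrier[OF Phi] A B by auto
  have TAB: "Re (mtrace (\<Phi> (A + B))) = Re (mtrace (\<Phi> A)) + Re (mtrace (\<Phi> B))"
    unfolding phi_add[OF Phi A B] mtrace_add[OF PA PB] by simp
  define K1 where "K1 = kantorovich h p powr (1/p)"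
  have Km: "kantorovich h p powr (- 1 / p) = 1 / K1"
    unfolding K1_def by (simp add: powr_minus_divide[symmetric])
  define TA where "TA = Re (mtrace (\<Phi> A))"
  define TB where "TB = Re (mtrace (\<Phi> B))"
  define tA where "tA = trPhi \<Phi> A p"
  define tB where "tB = trPhi \<Phi> B p"
  define tAB where "tAB = trPhi \<Phi> (A + B) p"
  have TAB': "Re (mtrace (\<Phi> (A + B))) = TA + TB" unfolding TA_def TB_def TAB ..
  show ?thesis
    unfolding h_def[symmetric] Km unfolding K1_def[symmetric] tA_def[symmetric] tB_def[symmetric] tAB_def[symmetric]
  proof (intro conjI impI)
    assume pp: "p < 0 \<or> 0 < p \<and> p \<le> 1"
    then have p0: "p \<noteq> 0" by auto
    have K1: "K1 > 0" unfolding K1_def using kant_pos[OF h p0] by simp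
    have a: "K1 * TA \<le> tA \<and> tA \<le> TA" using trace_bounds(1)[OF A hA bA Phi m h p0] pp unfolding K1_def TA_def tA_def by auto
    have b: "K1 * TB \<le> tB \<and> tB \<le> TB" using trace_bounds(1)[OF B hB _ Phi m h p0] bB mh pp unfolding K1_def TB_def tB_def by auto
    have c: "K1 * (TA + TB) \<le> tAB \<and> tAB \<le> TA + TB"
      using trace_bounds(1)[OF AB hAB bAB Phi _ h p0] m pp unfolding K1_def tAB_def TAB' by auto
    show "K1 * (tA + tB) \<le> tAB"
    proof -
      have "K1 * (tA + tB) \<le> K1 * (TA + TB)" using a b K1 by (intro mult_left_mono) auto
      then show ?thesis using c by linarith
    qed
    show "tAB \<le> 1 / K1 * (tA + tB)"
    proof -
      have "TA \<le> tA / K1" "TB \<le> tB / K1" using a b K1 by (auto simp: field_simps)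
      moreover have "1 / K1 * (tA + tB) = tA / K1 + tB / K1" by (simp add: add_divide_distrib)
      ultimately show ?thesis using c by linarith
    qed
  next
    assume pp: "1 \<le> p"
    then have p0: "p \<noteq> 0" by auto
    have K1: "K1 > 0" unfolding K1_def using kant_pos[OF h p0] by simp
    have a: "TA \<le> tA \<and> tA \<le> K1 * TA" using trace_bounds(2)[OF A hA bA Phi m h p0] pp unfolding K1_def TA_def tA_def by auto
    have b: "TB \<le> tB \<and> tB \<le> K1 * TB" using trace_bounds(2)[OF B hB _ Phi m h p0] bB mh pp unfolding K1_def TB_def tB_def by auto
    have c: "TA + TB \<le> tAB \<and> tAB \<le> K1 * (TA + TB)"
      using trace_bounds(2)[OF AB hAB bAB Phi _ h p0] m pp unfolding K1_def tAB_def TAB' by auto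
    show "1 / K1 * (tA + tB) \<le> tAB"
    proof -
      have "tA / K1 \<le> TA" "tB / K1 \<le> TB" using a b K1 by (auto simp: field_simps)
      moreover have "1 / K1 * (tA + tB) = tA / K1 + tB / K1" by (simp add: add_divide_distrib)
      ultimately show ?thesis using c by linarith
    qed
    show "tAB \<le> K1 * (tA + tB)"
    proof -
      have "K1 * (TA + TB) \<le> K1 * (tA + tB)" using a b K1 by (intro mult_left_mono) auto
      then show ?thesis using c by linarith
    qed
  qed
qed


end
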